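(* Let $H$ and $Z$ be as in the context, and assume $Z_{ijkl}(x)=0$ for all $x\in\mathbb{R}^n_+$ and all $i,j,k,l\in\{1,\dots,n\}$. Then $H_{ik}(x)=0$ for all $x\in\mathbb{R}^n_+$ and all $i,k\in\{1,\dots,n-1\}$.
   Context: Let $n\ge6$, $d=\lfloor\frac{n-2}{2}\rfloor$, $\mathbb{R}^n_+=\{x\in\mathbb{R}^n:x_n\ge0\}$, $\partial\mathbb{R}^n_+=\{x_n=0\}$. Let $H=(H_{ik})$ be a trace-free symmetric two-tensor on $\mathbb{R}^n_+$ whose components are polynomials $H_{ik}(x)=\sum_{2\le|\alpha|\le d}h_{ik,\alpha}x^\alpha$, such that: $H_{in}(x)=0$ for all $x\in\mathbb{R}^n_+$ and all $i$; $\sum_k H_{ik}(x)x_k=0$ for all $x\in\partial\mathbb{R}^n_+$ and all $i$; $\partial_nH_{ik}(x)=0$ for all $x\in\partial\mathbb{R}^n_+$ and all $i,k$. Define $A_{ik}=\sum_m\partial_i\partial_mH_{mk}+\sum_m\partial_m\partial_kH_{im}-\Delta H_{ik}-\frac{1}{n-1}\sum_{m,p}\partial_m\partial_pH_{mp}\,\delta_{ik}$ and $Z_{ijkl}=\partial_i\partial_kH_{jl}-\partial_i\partial_lH_{jk}-\partial_j\partial_kH_{il}+\partial_j\partial_lH_{ik}+\frac{1}{n-2}(A_{jl}\delta_{ik}-A_{jk}\delta_{il}-A_{il}\delta_{jk}+A_{ik}\delta_{jl})$. *)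

theory Defs
  imports "HOL-Analysis.Analysis"
begin

text \<open>Points of R^n are functions nat => real; coordinate x_{m+1} of the paper is x m
  (indices shifted to 0..n-1; the normal coordinate x_n is x (n-1)).
  Coordinates with index >= n are irrelevant.\<close>

definition half_space :: "nat \<Rightarrow> (nat \<Rightarrow> real) set" where
  "half_space n = {x. x (n - 1) \<ge> 0}"

definition boundary :: "nat \<Rightarrow> (nat \<Rightarrow> real) set" where
  "boundary n = {x. x (n - 1) = 0}"

definition pd :: "nat \<Rightarrow> ((nat \<Rightarrow> real) \<Rightarrow> real) \<Rightarrow> (nat \<Rightarrow> real) \<Rightarrow> real" where
  "pd i f x = deriv (\<lambda>t. f (x(i := t))) (x i)"

definition multi_idx :: "nat \<Rightarrow> nat \<Rightarrow> (nat \<Rightarrow> nat) set" where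
  "multi_idx n d = {\<alpha>. (\<forall>j. n \<le> j \<longrightarrow> \<alpha> j = 0) \<and> 2 \<le> sum \<alpha> {..<n} \<and> sum \<alpha> {..<n} \<le> d}"

definition monom :: "nat \<Rightarrow> (nat \<Rightarrow> nat) \<Rightarrow> (nat \<Rightarrow> real) \<Rightarrow> real" where
  "monom n \<alpha> x = (\<Prod>j<n. x j ^ \<alpha> j)"

definition kron :: "nat \<Rightarrow> nat \<Rightarrow> real" where
  "kron i k = (if i = k then 1 else 0)"

definition A_tensor :: "nat \<Rightarrow> (nat \<Rightarrow> nat \<Rightarrow> (nat \<Rightarrow> real) \<Rightarrow> real)
    \<Rightarrow> nat \<Rightarrow> nat \<Rightarrow> (nat \<Rightarrow> real) \<Rightarrow> real" where
  "A_tensor n H i k x =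
     (\<Sum>m<n. pd i (pd m (H m k)) x) + (\<Sum>m<n. pd m (pd k (H i m)) x)
     - (\<Sum>m<n. pd m (pd m (H i k)) x)
     - (1 / (real n - 1)) * (\<Sum>m<n. \<Sum>p<n. pd m (pd p (H m p)) x) * kron i k"

definition Z_tensor :: "nat \<Rightarrow> (nat \<Rightarrow> nat \<Rightarrow> (nat \<Rightarrow> real) \<Rightarrow> real)
    \<Rightarrow> nat \<Rightarrow> nat \<Rightarrow> nat \<Rightarrow> nat \<Rightarrow> (nat \<Rightarrow> real) \<Rightarrow> real" where
  "Z_tensor n H i j k l x =
     pd i (pd k (H j l)) x - pd i (pd l (H j k)) x - pd j (pd k (H i l)) x + pd j (pd l (H i k)) x
     + (1 / (real n - 2)) * (A_tensor n H j l x * kron i k - A_tensor n H j k x * kron i l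
                            - A_tensor n H i l x * kron j k + A_tensor n H i k x * kron j l)"

end

theory Submission
  imports Defs "HOL-Computational_Algebra.Polynomial"
begin

definition lined :: "((nat \<Rightarrow> real) \<Rightarrow> real) \<Rightarrow> bool" where
  "lined f \<longleftrightarrow> (\<forall>i x t. ((\<lambda>s. f (x(i:=s))) has_real_derivative pd i f (x(i:=t))) (at t))"

lemma pd_from_deriv:
  assumes "\<And>x t. ((\<lambda>s. f (x(i:=s))) has_real_derivative g (x(i:=t))) (at t)"
  shows "pd i f = g"
proof
  fix x
  have "deriv (\<lambda>s. f (x(i:=s))) (x i) = g (x(i:= x i))"
    by (rule DERIV_imp_deriv[OF assms])
  then show "pd i f x = g x" by (simp add: pd_def)
qed

lemma lined_D: "lined f \<Longrightarrow> ((\<lambda>s. f (x(i:=s))) has_real_derivative pd i f (x(i:=t))) (at t)"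
  by (simp add: lined_def)

lemma pd_const[simp]: "pd i (\<lambda>x. c) = (\<lambda>x. 0)"
  by (rule pd_from_deriv) simp

lemma lined_const[simp]: "lined (\<lambda>x. c)"
  by (simp add: lined_def)

lemma pd_coord[simp]: "pd i (\<lambda>x. x j) = (\<lambda>x. if i = j then 1 else 0)"
proof (rule pd_from_deriv)
  fix x :: "nat \<Rightarrow> real" and t
  show "((\<lambda>s. (x(i:=s)) j) has_real_derivative (if i = j then 1 else 0)) (at t)"
    by (cases "i = j") (auto intro!: derivative_eq_intros)
qed

lemma lined_coord[simp]: "lined (\<lambda>x. x j)"
  unfolding lined_def pd_coord
  by (auto intro!: derivative_eq_intros)

lemma pd_add:
  assumes "lined f" "lined g"
  shows "pd i (\<lambda>x. f x + g x) = (\<lambda>x. pd i f x + pd i g x)"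
  by (rule pd_from_deriv) (auto intro!: derivative_eq_intros lined_D assms)

lemma lined_add[simp]: "lined f \<Longrightarrow> lined g \<Longrightarrow> lined (\<lambda>x. f x + g x)"
  unfolding lined_def[of "\<lambda>x. f x + g x"] by (simp add: pd_add) (auto intro!: derivative_eq_intros lined_D)

lemma pd_mult:
  assumes "lined f" "lined g"
  shows "pd i (\<lambda>x. f x * g x) = (\<lambda>x. pd i f x * g x + f x * pd i g x)"
  by (rule pd_from_deriv) (auto intro!: derivative_eq_intros lined_D assms)

lemma lined_mult[simp]: "lined f \<Longrightarrow> lined g \<Longrightarrow> lined (\<lambda>x. f x * g x)"
  unfolding lined_def[of "\<lambda>x. f x * g x"] by (simp add: pd_mult) (auto intro!: derivative_eq_intros lined_D)

lemma pd_sum: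
  assumes "\<And>m. m \<in> S \<Longrightarrow> lined (F m)"
  shows "pd i (\<lambda>x. \<Sum>m\<in>S. F m x) = (\<lambda>x. \<Sum>m\<in>S. pd i (F m) x)"
  by (rule pd_from_deriv) (auto intro!: derivative_eq_intros lined_D assms)

lemma lined_sum[simp]: "(\<And>m. m \<in> S \<Longrightarrow> lined (F m)) \<Longrightarrow> lined (\<lambda>x. \<Sum>m\<in>S. F m x)"
  unfolding lined_def[of "\<lambda>x. \<Sum>m\<in>S. F m x"] by (simp add: pd_sum) (auto intro!: derivative_eq_intros lined_D)

lemma pd_cmult:
  assumes "lined f"
  shows "pd i (\<lambda>x. c * f x) = (\<lambda>x. c * pd i f x)"
  using pd_mult[of "\<lambda>x. c" f i] assms by simp

lemma pd_minus:
  assumes "lined f" "lined g"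
  shows "pd i (\<lambda>x. f x - g x) = (\<lambda>x. pd i f x - pd i g x)"
  by (rule pd_from_deriv) (auto intro!: derivative_eq_intros lined_D assms)

lemma lined_minus[simp]: "lined f \<Longrightarrow> lined g \<Longrightarrow> lined (\<lambda>x. f x - g x)"
  unfolding lined_def[of "\<lambda>x. f x - g x"] by (simp add: pd_minus) (auto intro!: derivative_eq_intros lined_D)

inductive polyf :: "((nat \<Rightarrow> real) \<Rightarrow> real) \<Rightarrow> bool" where
  pc: "polyf (\<lambda>x. c)"
| px: "polyf (\<lambda>x. x j)"
| padd: "polyf f \<Longrightarrow> polyf g \<Longrightarrow> polyf (\<lambda>x. f x + g x)"
| pmul: "polyf f \<Longrightarrow> polyf g \<Longrightarrow> polyf (\<lambda>x. f x * g x)"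

lemma polyf_lined_pd: "polyf f \<Longrightarrow> lined f \<and> polyf (pd i f)"
proof (induction rule: polyf.induct)
  case (pc c) then show ?case by (simp add: polyf.pc)
next
  case (px j) then show ?case by (simp add: polyf.pc)
next
  case (padd f g) then show ?case by (simp add: pd_add polyf.padd)
next
  case (pmul f g) then show ?case by (simp add: pd_mult polyf.padd polyf.pmul)
qed

lemma polyf_lined[simp]: "polyf f \<Longrightarrow> lined f" using polyf_lined_pd by blast
lemma polyf_pd[simp]: "polyf f \<Longrightarrow> polyf (pd i f)" using polyf_lined_pd by blast

lemma polyf_const[simp]: "polyf (\<lambda>x. c)" by (rule pc)
lemma polyf_coord[simp]: "polyf (\<lambda>x. x j)" by (rule px)
lemma polyf_add[simp]: "polyf f \<Longrightarrow> polyf g \<Longrightarrow> polyf (\<lambda>x. f x + g x)" by (rule padd)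
lemma polyf_mult[simp]: "polyf f \<Longrightarrow> polyf g \<Longrightarrow> polyf (\<lambda>x. f x * g x)" by (rule pmul)
lemma polyf_minus[simp]: "polyf f \<Longrightarrow> polyf g \<Longrightarrow> polyf (\<lambda>x. f x - g x)"
  using padd[of f "\<lambda>x. (-1) * g x"] pmul[OF pc, of g "-1"] by simp
lemma polyf_sum[simp]: "(\<And>m. m \<in> S \<Longrightarrow> polyf (F m)) \<Longrightarrow> polyf (\<lambda>x. \<Sum>m\<in>S. F m x)"
proof (induction S rule: infinite_finite_induct)
  case (infinite A) then show ?case by simp
next
  case empty then show ?case by simp
next
  case (insert a A) then show ?case by simp
qed

lemma pd_comm: "polyf f \<Longrightarrow> pd i (pd j f) = pd j (pd i f)"
proof (induction rule: polyf.induct)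
  case (pc c) then show ?case by simp
next
  case (px k) then show ?case by simp
next
  case (padd f g) then show ?case by (simp add: pd_add)
next
  case (pmul f g) then show ?case by (simp add: pd_mult pd_add algebra_simps)
qed

inductive hp :: "nat \<Rightarrow> nat \<Rightarrow> ((nat \<Rightarrow> real) \<Rightarrow> real) \<Rightarrow> bool" for n where
  hz: "hp n e (\<lambda>x. 0)"
| hc: "hp n 0 (\<lambda>x. c)"
| hx: "j < n \<Longrightarrow> hp n 1 (\<lambda>x. x j)"
| hadd: "hp n e f \<Longrightarrow> hp n e g \<Longrightarrow> hp n e (\<lambda>x. f x + g x)"
| hmul: "hp n e f \<Longrightarrow> hp n e' g \<Longrightarrow> hp n (e + e') (\<lambda>x. f x * g x)"

lemma hp_polyf[simp]: "hp n e f \<Longrightarrow> polyf f"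
  by (induction rule: hp.induct) auto

lemma hp_lined[simp]: "hp n e f \<Longrightarrow> lined f"
  by simp

lemma hp_pd_aux: "hp n e f \<Longrightarrow> (if e = 0 then pd i f = (\<lambda>x. 0) else hp n (e - 1) (pd i f))"
proof (induction rule: hp.induct)
  case (hz e) then show ?case by (simp add: hp.hz)
next
  case (hc c) then show ?case by simp
next
  case (hx j) then show ?case
    by (cases "i = j") (simp_all add: hp.hc hp.hz)
next
  case (hadd e f g) then show ?case
    by (cases "e = 0") (simp_all add: pd_add hp.hadd)
next
  case (hmul e f e' g)
  have lf: "lined f" and lg: "lined g" using hmul.hyps by simp_all
  show ?case
  proof (cases "e = 0")
    case True
    show ?thesis
    proof (cases "e' = 0")
      case True with \<open>e = 0\<close> hmul.IH show ?thesis by (simp add: pd_mult lf lg)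
    next
      case False
      with \<open>e = 0\<close> hmul.IH have "hp n (e' - 1) (pd i g)" "pd i f = (\<lambda>x. 0)" by auto
      have "hp n (e + (e' - 1)) (\<lambda>x. f x * pd i g x)"
        by (rule hp.hmul[OF hmul.hyps(1) \<open>hp n (e' - 1) (pd i g)\<close>])
      then have "hp n (e' - 1) (\<lambda>x. f x * pd i g x)" using \<open>e = 0\<close> by simp
      then show ?thesis using \<open>e = 0\<close> False \<open>pd i f = (\<lambda>x. 0)\<close> by (simp add: pd_mult lf lg)
    qed
  next
    case False
    note ef = this
    show ?thesis
    proof (cases "e' = 0")
      case True
      with hmul.IH have "pd i g = (\<lambda>x. 0)" by auto
      have "hp n (e - 1) (pd i f)" using hmul.IH(1) ef by auto
      then have "hp n ((e - 1) + e') (\<lambda>x. pd i f x * g x)"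
        by (rule hp.hmul[OF _ hmul.hyps(2)])
      then show ?thesis using ef True \<open>pd i g = (\<lambda>x. 0)\<close> by (simp add: pd_mult lf lg)
    next
      case False
      have "hp n (e - 1) (pd i f)" using hmul.IH(1) ef by auto
      then have a: "hp n ((e - 1) + e') (\<lambda>x. pd i f x * g x)"
        by (rule hp.hmul[OF _ hmul.hyps(2)])
      have "hp n (e' - 1) (pd i g)" using hmul.IH(2) False by auto
      then have b: "hp n (e + (e' - 1)) (\<lambda>x. f x * pd i g x)"
        by (rule hp.hmul[OF hmul.hyps(1)])
      have "e - 1 + e' = e + e' - 1" "e + (e' - 1) = e + e' - 1" using ef False by auto
      with a b have "hp n (e + e' - 1) (\<lambda>x. pd i f x * g x + f x * pd i g x)"
        by (metis hp.hadd)
      then show ?thesis using ef by (simp add: pd_mult lf lg)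
    qed
  qed
qed

lemma hp_pd[simp]: "hp n e f \<Longrightarrow> hp n (e - 1) (pd i f)"
  using hp_pd_aux[of n e f i] by (cases "e = 0") (auto intro: hp.hz)

lemma hp_pd0: "hp n 0 f \<Longrightarrow> pd i f = (\<lambda>x. 0)"
  using hp_pd_aux[of n 0 f i] by simp

lemma hp_cmult: "hp n e f \<Longrightarrow> hp n e (\<lambda>x. c * f x)"
  using hp.hmul[where e=0 and f="\<lambda>x. c" and e'=e and g=f, OF hp.hc] by simp

lemma hp_minus: "hp n e f \<Longrightarrow> hp n e g \<Longrightarrow> hp n e (\<lambda>x. f x - g x)"
  using hp.hadd[of n e f "\<lambda>x. (-1) * g x"] hp_cmult[of n e g "-1"] by simp

lemma hp_sum: "(\<And>m. m \<in> S \<Longrightarrow> hp n e (F m)) \<Longrightarrow> hp n e (\<lambda>x. \<Sum>m\<in>S. F m x)"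
proof (induction S rule: infinite_finite_induct)
  case (infinite A) then show ?case by (simp add: hp.hz)
next
  case empty then show ?case by (simp add: hp.hz)
next
  case (insert a A) then show ?case by (simp add: hp.hadd)
qed

lemma hp_prod: "finite S \<Longrightarrow> (\<And>m. m \<in> S \<Longrightarrow> hp n (E m) (F m)) \<Longrightarrow> hp n (\<Sum>m\<in>S. E m) (\<lambda>x. \<Prod>m\<in>S. F m x)"
proof (induction S rule: finite_induct)
  case empty then show ?case using hp.hc[of n 1] by simp
next
  case (insert a A) then show ?case using hp.hmul[where e="E a" and f="F a" and e'="sum E A"] by simp
qed

lemma hp_power: "j < n \<Longrightarrow> hp n k (\<lambda>x. x j ^ k)"
proof (induction k)
  case 0 then show ?case using hp.hc[of n 1] by simp
next
  case (Suc k) then show ?case using hp.hmul[OF hp.hx[of j n] Suc.IH] by simp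
qed

lemma hp_euler: "hp n e f \<Longrightarrow> (\<Sum>a<n. x a * pd a f x) = real e * f x"
proof (induction rule: hp.induct)
  case (hz e) then show ?case by simp
next
  case (hc c) then show ?case by simp
next
  case (hx j)
  have "(\<Sum>a<n. x a * (if a = j then 1 else 0)) = (\<Sum>a<n. if a = j then x a else 0)"
    by (rule sum.cong) auto
  also have "\<dots> = x j" using hx by (simp add: sum.delta)
  finally have "(\<Sum>a<n. x a * (if a = j then 1 else 0)) = x j" .
  then show ?case by simp
next
  case (hadd e f g)
  then show ?case by (simp add: pd_add sum.distrib distrib_left distrib_right)
next
  case (hmul e f e' g)
  have lf: "lined f" and lg: "lined g" using hmul.hyps by simp_all
  have "(\<Sum>a<n. x a * (pd a f x * g x + f x * pd a g x))
      = (\<Sum>a<n. x a * pd a f x) * g x + f x * (\<Sum>a<n. x a * pd a g x)"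
    by (simp add: sum.distrib sum_distrib_left sum_distrib_right algebra_simps)
  then show ?case using hmul.IH by (simp add: pd_mult lf lg algebra_simps)
qed

definition scale :: "real \<Rightarrow> (nat \<Rightarrow> real) \<Rightarrow> (nat \<Rightarrow> real)" where
  "scale s x = (\<lambda>j. s * x j)"

lemma hp_scale: "hp n e f \<Longrightarrow> f (scale s x) = s ^ e * f x"
  by (induction rule: hp.induct) (simp_all add: scale_def power_add algebra_simps)

lemma hp_monom: "(\<forall>j. n \<le> j \<longrightarrow> \<alpha> j = 0) \<Longrightarrow> hp n (sum \<alpha> {..<n}) (monom n \<alpha>)"
  unfolding monom_def using hp_prod[of "{..<n}" n \<alpha> "\<lambda>j x. x j ^ \<alpha> j"] hp_power
  by (simp add: fun_eq_iff)

definition dH :: "nat \<Rightarrow> (nat \<Rightarrow> nat \<Rightarrow> (nat \<Rightarrow> real) \<Rightarrow> real) \<Rightarrow> nat \<Rightarrow> (nat \<Rightarrow> real) \<Rightarrow> real" where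
  "dH n H l x = (\<Sum>m<n. pd m (H m l) x)"
definition Lap :: "nat \<Rightarrow> ((nat \<Rightarrow> real) \<Rightarrow> real) \<Rightarrow> (nat \<Rightarrow> real) \<Rightarrow> real" where
  "Lap n f x = (\<Sum>m<n. pd m (pd m f) x)"
definition DD :: "nat \<Rightarrow> (nat \<Rightarrow> nat \<Rightarrow> (nat \<Rightarrow> real) \<Rightarrow> real) \<Rightarrow> (nat \<Rightarrow> real) \<Rightarrow> real" where
  "DD n H x = (\<Sum>m<n. \<Sum>p<n. pd m (pd p (H m p)) x)"

lemma polyf_div[simp]: "polyf f \<Longrightarrow> polyf (\<lambda>x. f x / c)"
  using polyf_mult[of f "\<lambda>x. inverse c"] by (simp add: divide_inverse)

lemma pd_div: "lined f \<Longrightarrow> pd i (\<lambda>x. f x / c) = (\<lambda>x. pd i f x / c)"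
  using pd_mult[of f "\<lambda>x. inverse c" i] by (simp add: divide_inverse)

lemma pd_comm3a: "polyf f \<Longrightarrow> pd a (pd b (pd c f)) = pd b (pd a (pd c f))"
  by (simp add: pd_comm)
lemma pd_comm3b: "polyf f \<Longrightarrow> pd a (pd b (pd c f)) = pd a (pd c (pd b f))"
  by (simp add: pd_comm)

lemma pd_zero_fun: "(\<And>x. f x = 0) \<Longrightarrow> pd i f = (\<lambda>x. 0)"
proof -
  assume "\<And>x. f x = 0"
  then have "f = (\<lambda>x. 0)" by auto
  then show ?thesis by simp
qed

locale HS =
  fixes n :: nat and m :: nat and H :: "nat \<Rightarrow> nat \<Rightarrow> (nat \<Rightarrow> real) \<Rightarrow> real"
  assumes n6: "6 \<le> n" and m2: "2 \<le> m"
    and hpH: "\<And>i k. hp n m (H i k)"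
    and symH: "\<And>i k. i < n \<Longrightarrow> k < n \<Longrightarrow> H i k = H k i"
    and trH: "\<And>x. (\<Sum>i<n. H i i x) = 0"
    and HnH: "\<And>i x. i < n \<Longrightarrow> H i (n - 1) x = 0"
    and b1: "\<And>x i. x \<in> boundary n \<Longrightarrow> i < n \<Longrightarrow> (\<Sum>k<n. H i k x * x k) = 0"
    and b2: "\<And>x i k. x \<in> boundary n \<Longrightarrow> i < n \<Longrightarrow> k < n \<Longrightarrow> pd (n - 1) (H i k) x = 0"
    and Z0: "\<And>x i j k l. i < n \<Longrightarrow> j < n \<Longrightarrow> k < n \<Longrightarrow> l < n \<Longrightarrow> Z_tensor n H i j k l x = 0"
begin

lemma pH[simp]: "polyf (H i k)" using hpH hp_polyf by blast

lemma pA[simp]: "polyf (A_tensor n H i k)"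
  unfolding A_tensor_def[abs_def] by simp

lemma pdH[simp]: "polyf (dH n H l)"
  unfolding dH_def[abs_def] by simp
lemma pDD[simp]: "polyf (DD n H)"
  unfolding DD_def[abs_def] by simp
lemma pLap[simp]: "polyf f \<Longrightarrow> polyf (Lap n f)"
  unfolding Lap_def[abs_def] by simp

lemma pd_dH: "pd a (dH n H l) x = (\<Sum>m<n. pd a (pd m (H m l)) x)"
  unfolding dH_def[abs_def] by (simp add: pd_sum)

lemma pd_Lap: "polyf f \<Longrightarrow> pd a (Lap n f) x = Lap n (pd a f) x"
  unfolding Lap_def[abs_def] by (simp add: pd_sum pd_comm3a pd_comm3b)

lemma A_eq: "i < n \<Longrightarrow> k < n \<Longrightarrow> A_tensor n H i k x =
   pd i (dH n H k) x + pd k (dH n H i) x - Lap n (H i k) x - (1 / (real n - 1)) * DD n H x * kron i k"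
proof -
  assume ik: "i < n" "k < n"
  have "(\<Sum>m<n. pd m (pd k (H i m)) x) = (\<Sum>m<n. pd k (pd m (H m i)) x)"
    by (rule sum.cong) (auto simp: symH ik pd_comm)
  then show ?thesis unfolding A_tensor_def pd_dH Lap_def DD_def by simp
qed

lemma A_sym: "i < n \<Longrightarrow> k < n \<Longrightarrow> A_tensor n H i k x = A_tensor n H k i x"
  by (simp add: A_eq symH kron_def)

lemma A_fun: "i < n \<Longrightarrow> k < n \<Longrightarrow> A_tensor n H i k = (\<lambda>x.
   pd i (dH n H k) x + pd k (dH n H i) x - Lap n (H i k) x - (1 / (real n - 1)) * DD n H x * kron i k)"
  using A_eq by auto

lemma pdA: "j < n \<Longrightarrow> l < n \<Longrightarrow> pd a (A_tensor n H j l) x =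
   pd a (pd j (dH n H l)) x + pd a (pd l (dH n H j)) x - pd a (Lap n (H j l)) x
   - (1 / (real n - 1)) * pd a (DD n H) x * kron j l"
  by (simp add: A_fun pd_add pd_minus pd_mult pd_div)

lemma pd2_dH: "pd a (pd b (dH n H l)) x = (\<Sum>m<n. pd a (pd b (pd m (H m l))) x)"
  unfolding dH_def[abs_def] by (simp add: pd_sum)

lemma sum_kron: "k < n \<Longrightarrow> (\<Sum>i<n. f i * kron i k) = f k"
  by (simp add: kron_def if_distrib cong: if_cong)

lemma sum_kron': "k < n \<Longrightarrow> (\<Sum>i<n. f i * kron k i) = f k"
  by (simp add: kron_def if_distrib cong: if_cong)

lemma pd_Z: "pd i (Z_tensor n H i j k l) x =
  pd i (pd i (pd k (H j l))) x - pd i (pd i (pd l (H j k))) x - pd i (pd j (pd k (H i l))) x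
  + pd i (pd j (pd l (H i k))) x
  + (1 / (real n - 2)) * (pd i (A_tensor n H j l) x * kron i k - pd i (A_tensor n H j k) x * kron i l
      - pd i (A_tensor n H i l) x * kron j k + pd i (A_tensor n H i k) x * kron j l)"
  unfolding Z_tensor_def[abs_def] by (simp add: pd_add pd_minus pd_mult pd_div)

lemma sum_pd_dH: "(\<lambda>x. \<Sum>i<n. pd i (dH n H i) x) = DD n H"
proof
  fix x
  have "(\<Sum>i<n. pd i (dH n H i) x) = (\<Sum>i<n. \<Sum>p<n. pd i (pd p (H p i)) x)"
    by (simp add: pd_dH)
  also have "\<dots> = (\<Sum>p<n. \<Sum>i<n. pd i (pd p (H p i)) x)" by (rule sum.swap)
  also have "\<dots> = DD n H x" unfolding DD_def by (simp add: pd_comm)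
  finally show "(\<Sum>i<n. pd i (dH n H i) x) = DD n H x" .
qed

lemma divA: "l < n \<Longrightarrow> (\<Sum>i<n. pd i (A_tensor n H i l) x) = (1 - 1 / (real n - 1)) * pd l (DD n H) x"
proof -
  assume l: "l < n"
  have s1: "(\<Sum>i<n. pd i (pd i (dH n H l)) x) = Lap n (dH n H l) x" by (simp add: Lap_def)
  have s2: "(\<Sum>i<n. pd i (pd l (dH n H i)) x) = pd l (DD n H) x"
  proof -
    have "(\<Sum>i<n. pd i (pd l (dH n H i)) x) = (\<Sum>i<n. pd l (pd i (dH n H i)) x)"
      by (simp add: pd_comm)
    also have "\<dots> = pd l (\<lambda>x. \<Sum>i<n. pd i (dH n H i) x) x" by (simp add: pd_sum)
    also have "\<dots> = pd l (DD n H) x" by (simp add: sum_pd_dH)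
    finally show ?thesis .
  qed
  have s3: "(\<Sum>i<n. pd i (Lap n (H i l)) x) = Lap n (dH n H l) x"
  proof -
    have "(\<Sum>i<n. pd i (Lap n (H i l)) x) = (\<Sum>i<n. \<Sum>m<n. pd m (pd m (pd i (H i l))) x)"
      by (simp add: pd_Lap Lap_def)
    also have "\<dots> = (\<Sum>m<n. \<Sum>i<n. pd m (pd m (pd i (H i l))) x)" by (rule sum.swap)
    also have "\<dots> = Lap n (dH n H l) x" by (simp add: Lap_def pd2_dH)
    finally show ?thesis .
  qed
  have s4: "(\<Sum>i<n. (1 / (real n - 1)) * pd i (DD n H) x * kron i l) = (1 / (real n - 1)) * pd l (DD n H) x"
    using sum_kron[OF l, of "\<lambda>i. (1 / (real n - 1)) * pd i (DD n H) x"] by simp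
  have "(\<Sum>i<n. pd i (A_tensor n H i l) x) = (\<Sum>i<n. pd i (pd i (dH n H l)) x) + (\<Sum>i<n. pd i (pd l (dH n H i)) x)
     - (\<Sum>i<n. pd i (Lap n (H i l)) x) - (\<Sum>i<n. (1 / (real n - 1)) * pd i (DD n H) x * kron i l)"
    using l by (simp add: pdA sum.distrib sum_subtractf)
  then show ?thesis using s1 s2 s3 s4 by (simp add: algebra_simps)
qed

lemma cotton: assumes jkl: "j < n" "k < n" "l < n"
  shows "pd k (A_tensor n H j l) x = pd l (A_tensor n H j k) x"
proof -
  define c where "c = 1 / (real n - 1)"
  define c2 where "c2 = 1 / (real n - 2)"
  have n6': "real n \<ge> 6" using n6 by simp
  have cc: "c2 * (1 - c) = c" unfolding c_def c2_def using n6' by (simp add: field_simps)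
  have c21: "c2 \<noteq> 1" unfolding c2_def using n6' by (simp add: field_simps)
  have "\<forall>i<n. Z_tensor n H i j k l = (\<lambda>x. 0)" using Z0 jkl by auto
  then have z: "(\<Sum>i<n. pd i (Z_tensor n H i j k l) x) = 0" by simp
  define P1 where "P1 = pd k (Lap n (H j l)) x"
  define P2 where "P2 = pd l (Lap n (H j k)) x"
  define P3 where "P3 = pd j (pd k (dH n H l)) x"
  define P4 where "P4 = pd j (pd l (dH n H k)) x"
  define dA where "dA = (\<lambda>q. (\<Sum>i<n. pd i (A_tensor n H i q) x))"
  have e1: "(\<Sum>i<n. pd i (pd i (pd k (H j l))) x) = P1" unfolding P1_def by (simp add: pd_Lap Lap_def)
  have e2: "(\<Sum>i<n. pd i (pd i (pd l (H j k))) x) = P2" unfolding P2_def by (simp add: pd_Lap Lap_def)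
  have e3: "(\<Sum>i<n. pd i (pd j (pd k (H i l))) x) = P3" unfolding P3_def
    by (simp add: pd2_dH pd_comm3a pd_comm3b)
  have e4: "(\<Sum>i<n. pd i (pd j (pd l (H i k))) x) = P4" unfolding P4_def
    by (simp add: pd2_dH pd_comm3a pd_comm3b)
  have e5: "(\<Sum>i<n. pd i (A_tensor n H j l) x * kron i k) = pd k (A_tensor n H j l) x"
    by (rule sum_kron) (rule jkl)
  have e6: "(\<Sum>i<n. pd i (A_tensor n H j k) x * kron i l) = pd l (A_tensor n H j k) x"
    by (rule sum_kron) (rule jkl)
  have e7: "(\<Sum>i<n. pd i (A_tensor n H i l) x * kron j k) = dA l * kron j k"
    unfolding dA_def by (simp add: sum_distrib_right)
  have e8: "(\<Sum>i<n. pd i (A_tensor n H i k) x * kron j l) = dA k * kron j l"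
    unfolding dA_def by (simp add: sum_distrib_right)
  have "(\<Sum>i<n. pd i (Z_tensor n H i j k l) x) = P1 - P2 - P3 + P4 +
     c2 * (pd k (A_tensor n H j l) x - pd l (A_tensor n H j k) x - dA l * kron j k + dA k * kron j l)"
    unfolding pd_Z c2_def
    by (simp add: sum.distrib sum_subtractf sum_divide_distrib[symmetric] e1 e2 e3 e4 e5 e6 e7 e8)
  then have z2: "0 = P1 - P2 - P3 + P4 +
     c2 * (pd k (A_tensor n H j l) x - pd l (A_tensor n H j k) x - dA l * kron j k + dA k * kron j l)"
    using z by simp
  have dAl: "dA l = (1 - c) * pd l (DD n H) x" unfolding dA_def c_def by (rule divA) (rule jkl)
  have dAk: "dA k = (1 - c) * pd k (DD n H) x" unfolding dA_def c_def by (rule divA) (rule jkl)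
  have Akl: "pd k (A_tensor n H j l) x = pd k (pd j (dH n H l)) x + pd k (pd l (dH n H j)) x - P1
     - c * pd k (DD n H) x * kron j l" unfolding P1_def c_def using jkl by (simp add: pdA)
  have Alk: "pd l (A_tensor n H j k) x = pd l (pd j (dH n H k)) x + pd l (pd k (dH n H j)) x - P2
     - c * pd l (DD n H) x * kron j k" unfolding P2_def c_def using jkl by (simp add: pdA)
  have cm1: "pd k (pd j (dH n H l)) x = P3" unfolding P3_def by (simp add: pd_comm)
  have cm2: "pd l (pd j (dH n H k)) x = P4" unfolding P4_def by (simp add: pd_comm)
  have cm3: "pd k (pd l (dH n H j)) x = pd l (pd k (dH n H j)) x" by (simp add: pd_comm)
  define C where "C = pd k (A_tensor n H j l) x - pd l (A_tensor n H j k) x"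
  have "P1 - P2 - P3 + P4 = - C - c * (pd k (DD n H) x * kron j l - pd l (DD n H) x * kron j k)"
    unfolding C_def using Akl Alk cm1 cm2 cm3 by (simp add: algebra_simps)
  with z2 have "0 = - C - c * (pd k (DD n H) x * kron j l - pd l (DD n H) x * kron j k)
     + c2 * (C - (1 - c) * pd l (DD n H) x * kron j k + (1 - c) * pd k (DD n H) x * kron j l)"
    unfolding C_def dAl dAk by (simp add: algebra_simps)
  also have "\<dots> = (c2 - 1) * C + (c2 * (1 - c) - c) * (pd k (DD n H) x * kron j l - pd l (DD n H) x * kron j k)"
    by (simp add: algebra_simps)
  finally have "(c2 - 1) * C = 0" using cc by simp
  then have "C = 0" using c21 by simp
  then show ?thesis unfolding C_def by simp
qed

end

definition sq :: "nat \<Rightarrow> (nat \<Rightarrow> real) \<Rightarrow> real" where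
  "sq n x = (\<Sum>i<n. x i * x i)"
definition Lt :: "nat \<Rightarrow> ((nat \<Rightarrow> real) \<Rightarrow> real) \<Rightarrow> (nat \<Rightarrow> real) \<Rightarrow> real" where
  "Lt n f x = (\<Sum>j<n - 1. pd j (pd j f) x)"

lemma polyf_sq[simp]: "polyf (sq n)" unfolding sq_def[abs_def] by simp

lemma pd_sq: "j < n \<Longrightarrow> pd j (sq n) = (\<lambda>x. 2 * x j)"
proof -
  assume j: "j < n"
  have "pd j (sq n) = (\<lambda>x. \<Sum>i<n. (if j = i then 1 else 0) * x i + x i * (if j = i then 1 else 0))"
    unfolding sq_def[abs_def] by (simp add: pd_sum pd_mult)
  also have "\<dots> = (\<lambda>x. 2 * x j)" using j by (simp add: if_distrib sum.distrib cong: if_cong)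
  finally show ?thesis .
qed

lemma pd_B_eq:
  assumes "\<forall>y\<in>boundary n. F y = G y" "j \<noteq> n - 1" "x \<in> boundary n"
  shows "pd j F x = pd j G x"
proof -
  have "(\<lambda>t. F (x(j:=t))) = (\<lambda>t. G (x(j:=t)))"
    using assms by (auto simp: boundary_def)
  then show ?thesis by (simp add: pd_def)
qed

lemma pd_B_zero:
  assumes "\<forall>y\<in>boundary n. F y = 0" "j \<noteq> n - 1" "x \<in> boundary n"
  shows "pd j F x = 0"
  using pd_B_eq[of n F "\<lambda>x. 0" j x] assms by simp

lemma hp_pd2: "hp n e f \<Longrightarrow> hp n (e - 2) (pd a (pd b f))"
  using hp_pd[of n e f b] hp_pd[of n "e - 1" "pd b f" a] by (simp add: diff_diff_left numeral_2_eq_2)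

lemma hp_low2: "hp n e f \<Longrightarrow> e < 2 \<Longrightarrow> pd a (pd b f) = (\<lambda>x. 0)"
  using hp_pd[of n e f b] hp_pd0[of n "pd b f" a] by simp

lemma recur:
  assumes "1 \<le> n"
  shows "\<forall>f \<mu>. hp n e f \<longrightarrow> \<mu> \<le> 0 \<longrightarrow> (\<forall>x\<in>boundary n. f x = \<mu> * sq n x * Lt n f x)
           \<longrightarrow> (\<forall>x\<in>boundary n. f x = 0)"
proof (induction e rule: less_induct)
  case (less e)
  show ?case
  proof (intro allI impI ballI)
    fix f \<mu> x
    assume hf: "hp n e f" and mu: "\<mu> \<le> 0" and rel: "\<forall>x\<in>boundary n. f x = \<mu> * sq n x * Lt n f x"
      and x: "x \<in> boundary n"
    define g where "g = Lt n f"
    show "f x = 0"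
    proof (cases "e < 2")
      case True
      then have "g = (\<lambda>x. 0)" unfolding g_def Lt_def[abs_def] using hp_low2[OF hf] by simp
      then show ?thesis using rel x unfolding g_def by simp
    next
      case False
      have hg: "hp n (e - 2) g" unfolding g_def Lt_def[abs_def]
        by (rule hp_sum) (rule hp_pd2[OF hf])
      have lg: "lined g" "lined (pd j g)" for j using hg by auto
      have pd1: "pd j (\<lambda>y. \<mu> * sq n y * g y) = (\<lambda>y. \<mu> * (2 * y j * g y + sq n y * pd j g y))" if "j < n" for j
        using that hg by (simp add: pd_mult pd_sq algebra_simps)
      have pd2: "pd j (pd j (\<lambda>y. \<mu> * sq n y * g y)) = (\<lambda>y. \<mu> * (2 * g y + 4 * y j * pd j g y + sq n y * pd j (pd j g) y))" if "j < n" for j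
      proof -
        have l1: "lined (\<lambda>y. y j * g y)" "lined (\<lambda>y. sq n y * pd j g y)" "lined (pd j (pd j g))" using hg by auto
        have "pd j (pd j (\<lambda>y. \<mu> * sq n y * g y)) = pd j (\<lambda>y. \<mu> * (2 * (y j * g y) + sq n y * pd j g y))"
          using pd1[OF that] by (simp add: mult.assoc)
        also have "\<dots> = (\<lambda>y. \<mu> * (2 * pd j (\<lambda>y. y j * g y) y + pd j (\<lambda>y. sq n y * pd j g y) y))"
          using l1 by (simp add: pd_cmult pd_add)
        also have "\<dots> = (\<lambda>y. \<mu> * (2 * (g y + y j * pd j g y) + (2 * y j * pd j g y + sq n y * pd j (pd j g) y)))"
          using hg that by (simp add: pd_mult pd_sq)
        finally show ?thesis by (simp add: fun_eq_iff algebra_simps)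
      qed
      have eul: "(\<Sum>j<n - 1. y j * pd j g y) = real (e - 2) * g y" if "y \<in> boundary n" for y
      proof -
        have "(\<Sum>j<n. y j * pd j g y) = (\<Sum>j<n - 1. y j * pd j g y) + y (n - 1) * pd (n - 1) g y"
        proof -
          obtain k where k: "n = Suc k" using assms by (cases n) auto
          show ?thesis unfolding k by simp
        qed
        then show ?thesis using that hp_euler[OF hg, of y] by (simp add: boundary_def)
      qed
      have Ltmu: "Lt n (\<lambda>y. \<mu> * sq n y * g y) y = \<mu> * (2 * real (n - 1) * g y + 4 * real (e - 2) * g y + sq n y * Lt n g y)"
        if "y \<in> boundary n" for y
      proof -
        have "Lt n (\<lambda>y. \<mu> * sq n y * g y) y = (\<Sum>j<n - 1. \<mu> * (2 * g y + 4 * y j * pd j g y + sq n y * pd j (pd j g) y))"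
          unfolding Lt_def by (rule sum.cong) (auto simp: pd2)
        also have "\<dots> = \<mu> * (2 * real (n - 1) * g y + 4 * (\<Sum>j<n - 1. y j * pd j g y) + sq n y * Lt n g y)"
          by (simp add: sum.distrib sum_distrib_left algebra_simps Lt_def)
        finally show ?thesis using eul[OF that] by simp
      qed
      have rel1: "\<forall>y\<in>boundary n. pd j f y = pd j (\<lambda>y. \<mu> * sq n y * g y) y" if "j < n - 1" for j
        using pd_B_eq[of n f _ j] rel that unfolding g_def by auto
      have rel2: "pd j (pd j f) y = pd j (pd j (\<lambda>y. \<mu> * sq n y * g y)) y" if "j < n - 1" "y \<in> boundary n" for j y
        using pd_B_eq[OF rel1[OF that(1)]] that by simp
      have grel: "g y = \<mu> * (2 * real (n - 1) * g y + 4 * real (e - 2) * g y + sq n y * Lt n g y)"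
        if "y \<in> boundary n" for y
      proof -
        have "Lt n f y = Lt n (\<lambda>y. \<mu> * sq n y * g y) y"
          unfolding Lt_def by (rule sum.cong) (auto simp: rel2 that)
        then have "g y = Lt n (\<lambda>y. \<mu> * sq n y * g y) y" by (simp only: g_def)
        then show ?thesis using Ltmu[OF that] by simp
      qed
      define \<kappa> where "\<kappa> = 1 - \<mu> * (2 * real (n - 1) + 4 * real (e - 2))"
      have kp: "\<kappa> \<ge> 1" unfolding \<kappa>_def using mu by (simp add: mult_nonpos_nonneg)
      have grel2: "\<forall>y\<in>boundary n. g y = (\<mu> / \<kappa>) * sq n y * Lt n g y"
      proof
        fix y assume y: "y \<in> boundary n"
        have "\<kappa> * g y = \<mu> * sq n y * Lt n g y" using grel[OF y] unfolding \<kappa>_def by (simp add: algebra_simps)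
        then show "g y = (\<mu> / \<kappa>) * sq n y * Lt n g y" using kp by (simp add: field_simps)
      qed
      have "\<mu> / \<kappa> \<le> 0" using mu kp by (simp add: divide_nonpos_pos)
      moreover have "e - 2 < e" using False by simp
      ultimately have "\<forall>y\<in>boundary n. g y = 0"
        using less.IH[of "e - 2"] hg grel2 by blast
      then show ?thesis using rel x unfolding g_def by simp
    qed
  qed
qed

lemma hp_multc: "hp n e f \<Longrightarrow> hp n e (\<lambda>x. f x * c)"
  using hp_cmult[of n e f c] by (simp add: mult.commute)
lemma hp_divc: "hp n e f \<Longrightarrow> hp n e (\<lambda>x. f x / c)"
  using hp_multc[of n e f "inverse c"] by (simp add: divide_inverse)

definition vv :: "nat \<Rightarrow> (nat \<Rightarrow> nat \<Rightarrow> (nat \<Rightarrow> real) \<Rightarrow> real) \<Rightarrow> nat \<Rightarrow> (nat \<Rightarrow> real) \<Rightarrow> real" where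
  "vv n H j x = (\<Sum>k<n. x k * A_tensor n H j k x)"
definition ph :: "nat \<Rightarrow> (nat \<Rightarrow> nat \<Rightarrow> (nat \<Rightarrow> real) \<Rightarrow> real) \<Rightarrow> (nat \<Rightarrow> real) \<Rightarrow> real" where
  "ph n H x = (\<Sum>i<n. \<Sum>k<n. x i * x k * A_tensor n H i k x)"

lemma sum_ind1: "l < (n::nat) \<Longrightarrow> (\<Sum>k<n. f k * (if l = k then 1 else 0)) = (f l :: real)"
proof -
  assume "l < n"
  have "(\<Sum>k<n. f k * (if l = k then 1 else 0)) = (\<Sum>k<n. if l = k then f k else 0)" by (rule sum.cong) auto
  also have "\<dots> = f l" using \<open>l < n\<close> by (subst sum.delta') auto
  finally show ?thesis .
qed

lemma sum_ind2: "l < (n::nat) \<Longrightarrow> (\<Sum>k<n. (if l = k then 1 else 0) * f k) = (f l :: real)"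
  using sum_ind1[of l n f] by (simp add: mult.commute)

lemma mu_aux: "(M::real) \<noteq> 0 \<Longrightarrow> (-1 / (a * M)) * s * (M * t) = - s * t / a"
  by (cases "a = 0") (simp_all add: field_simps)

lemma sum_split_last: "1 \<le> (n::nat) \<Longrightarrow> (\<Sum>j<n. f j) = (\<Sum>j<n - 1. f j) + f (n - 1)"
proof -
  assume "1 \<le> n"
  then obtain k where k: "n = Suc k" by (cases n) auto
  show ?thesis unfolding k by simp
qed

context HS begin

lemma hpA: "hp n (m - 2) (A_tensor n H i k)"
  unfolding A_tensor_def[abs_def]
  by (intro hp_minus hp.hadd hp_sum hp_pd2[OF hpH] hp_multc hp_divc hp_cmult)

lemma hpH1: "hp n (m - 1) (pd i (H j l))" using hp_pd[OF hpH] .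

lemma eulH1: "(\<Sum>a<n. x a * pd a (pd i (H j l)) x) = (real m - 1) * pd i (H j l) x"
  using hp_euler[OF hpH1, of x i j l] m2 by simp

lemma eulH: "(\<Sum>a<n. x a * pd a (H j l) x) = real m * H j l x"
  using hp_euler[OF hpH] by simp

lemma eulA: "(\<Sum>a<n. x a * pd a (A_tensor n H i k) x) = (real m - 2) * A_tensor n H i k x"
  using hp_euler[OF hpA, of x i k] m2 by simp

lemma nu_ne: "j < n - 1 \<Longrightarrow> j \<noteq> n - 1" by simp

lemma Bd1: assumes x: "x \<in> boundary n" and j: "j < n" and l: "l < n - 1"
  shows "(\<Sum>k<n. x k * pd l (H j k) x) = - H j l x"
proof -
  have "pd l (\<lambda>y. \<Sum>k<n. H j k y * y k) x = 0"
    by (rule pd_B_zero) (use b1 j x l in auto)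
  moreover have "pd l (\<lambda>y. \<Sum>k<n. H j k y * y k) x = (\<Sum>k<n. pd l (H j k) x * x k + H j k x * (if l = k then 1 else 0))"
    by (simp add: pd_sum pd_mult)
  moreover have "(\<Sum>k<n. pd l (H j k) x * x k + H j k x * (if l = k then 1 else 0)) = (\<Sum>k<n. x k * pd l (H j k) x) + H j l x"
    using l by (simp add: sum.distrib sum_ind1 mult.commute)
  ultimately show ?thesis by simp
qed

lemma Bd2: assumes x: "x \<in> boundary n" and i: "i < n" and j: "j < n - 1" and l: "l < n - 1"
  shows "pd l (H i j) x + (\<Sum>k<n. x k * pd j (pd l (H i k)) x) + pd j (H i l) x = 0"
proof -
  have "pd j (\<lambda>y. (\<Sum>k<n. y k * pd l (H i k) y) + H i l y) x = 0"
    by (rule pd_B_zero) (use Bd1 i x l j in auto)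
  moreover have "pd j (\<lambda>y. (\<Sum>k<n. y k * pd l (H i k) y) + H i l y) x
     = (\<Sum>k<n. (if j = k then 1 else 0) * pd l (H i k) x + x k * pd j (pd l (H i k)) x) + pd j (H i l) x"
    by (simp add: pd_sum pd_mult pd_add)
  moreover have "(\<Sum>k<n. (if j = k then 1 else 0) * pd l (H i k) x + x k * pd j (pd l (H i k)) x)
      = pd l (H i j) x + (\<Sum>k<n. x k * pd j (pd l (H i k)) x)"
    using j by (simp add: sum.distrib sum_ind2)
  ultimately show ?thesis by simp
qed

lemma dsum: "(\<Sum>i<n. \<Sum>k<n. x i * x k * F i k) = (\<Sum>i<n. x i * (\<Sum>k<n. x k * F i k))" for x :: "nat \<Rightarrow> real" and F :: "nat \<Rightarrow> nat \<Rightarrow> real"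
  by (simp add: sum_distrib_left mult.assoc)

lemma S1: "(\<Sum>i<n. \<Sum>k<n. x i * x k * pd i (pd k (H j l)) x) = real m * (real m - 1) * H j l x"
proof -
  have "(\<Sum>k<n. x k * pd i (pd k (H j l)) x) = (real m - 1) * pd i (H j l) x" for i
    using eulH1[of x i j l] by (simp add: pd_comm)
  then have "(\<Sum>i<n. \<Sum>k<n. x i * x k * pd i (pd k (H j l)) x) = (\<Sum>i<n. x i * ((real m - 1) * pd i (H j l) x))"
    by (simp add: dsum)
  also have "\<dots> = (real m - 1) * (\<Sum>i<n. x i * pd i (H j l) x)"
    by (simp add: sum_distrib_left algebra_simps)
  finally show ?thesis using eulH[of x j l] by simp
qed

lemma S2: assumes x: "x \<in> boundary n" and j: "j < n" and l: "l < n - 1"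
  shows "(\<Sum>i<n. \<Sum>k<n. x i * x k * pd i (pd l (H j k)) x) = - (real m - 1) * H j l x"
proof -
  have "(\<Sum>i<n. \<Sum>k<n. x i * x k * pd i (pd l (H j k)) x) = (\<Sum>k<n. \<Sum>i<n. x k * (x i * pd i (pd l (H j k)) x))"
    by (subst sum.swap) (simp add: algebra_simps)
  also have "\<dots> = (\<Sum>k<n. x k * ((real m - 1) * pd l (H j k) x))"
    by (simp add: sum_distrib_left[symmetric] eulH1)
  also have "\<dots> = (real m - 1) * (\<Sum>k<n. x k * pd l (H j k) x)"
    by (simp add: sum_distrib_left algebra_simps)
  finally show ?thesis using Bd1[OF x j l] by (simp add: algebra_simps)
qed

lemma S3: assumes x: "x \<in> boundary n" and j: "j < n - 1" and l: "l < n"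
  shows "(\<Sum>i<n. \<Sum>k<n. x i * x k * pd j (pd k (H i l)) x) = - (real m - 1) * H j l x"
proof -
  have "(\<Sum>k<n. x k * pd j (pd k (H i l)) x) = (real m - 1) * pd j (H i l) x" for i
    using eulH1[of x j i l] by (simp add: pd_comm)
  then have "(\<Sum>i<n. \<Sum>k<n. x i * x k * pd j (pd k (H i l)) x) = (\<Sum>i<n. x i * ((real m - 1) * pd j (H i l) x))"
    by (simp add: dsum)
  also have "\<dots> = (real m - 1) * (\<Sum>i<n. x i * pd j (H l i) x)"
    using l by (simp add: sum_distrib_left algebra_simps symH)
  also have "\<dots> = - (real m - 1) * H j l x"
    using Bd1[OF x l j] symH[of l j] j l by (simp add: algebra_simps)
  finally show ?thesis .
qed

lemma S4: assumes x: "x \<in> boundary n" and j: "j < n - 1" and l: "l < n - 1"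
  shows "(\<Sum>i<n. \<Sum>k<n. x i * x k * pd j (pd l (H i k)) x) = 2 * H j l x"
proof -
  have "(\<Sum>k<n. x k * pd j (pd l (H i k)) x) = - pd l (H j i) x - pd j (H l i) x" if "i < n" for i
    using Bd2[OF x that j l] symH[OF that, of j] symH[OF that, of l] j l by simp
  then have "(\<Sum>i<n. \<Sum>k<n. x i * x k * pd j (pd l (H i k)) x) = (\<Sum>i<n. x i * (- pd l (H j i) x - pd j (H l i) x))"
    by (simp add: dsum)
  also have "\<dots> = - (\<Sum>i<n. x i * pd l (H j i) x) - (\<Sum>i<n. x i * pd j (H l i) x)"
    by (simp add: sum_subtractf sum_negf algebra_simps)
  also have "\<dots> = H j l x + H l j x" using Bd1[OF x _ l, of j] Bd1[OF x _ j, of l] j l by simp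
  finally show ?thesis using symH[of l j] j l by simp
qed

lemma T1: "(\<Sum>i<n. \<Sum>k<n. x i * x k * (a * kron i k)) = sq n x * a"
proof -
  have "(\<Sum>k<n. x k * (a * kron i k)) = a * x i" if "i < n" for i
    using sum_kron'[OF that, of "\<lambda>k. x k * a"] by (simp add: algebra_simps)
  then have "(\<Sum>i<n. \<Sum>k<n. x i * x k * (a * kron i k)) = (\<Sum>i<n. x i * (a * x i))"
    by (simp add: dsum)
  then show ?thesis by (simp add: sq_def sum_distrib_left algebra_simps)
qed

lemma T2: "l < n \<Longrightarrow> (\<Sum>i<n. \<Sum>k<n. x i * x k * (A_tensor n H j k x * kron i l)) = x l * vv n H j x"
proof -
  assume l: "l < n"
  have "(\<Sum>i<n. \<Sum>k<n. x i * x k * (A_tensor n H j k x * kron i l)) = (\<Sum>i<n. (x i * vv n H j x) * kron i l)"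
    unfolding vv_def by (simp add: sum_distrib_left sum_distrib_right algebra_simps)
  also have "\<dots> = x l * vv n H j x" using sum_kron[OF l] .
  finally show ?thesis .
qed

lemma T3: "j < n \<Longrightarrow> l < n \<Longrightarrow> (\<Sum>i<n. \<Sum>k<n. x i * x k * (A_tensor n H i l x * kron j k)) = x j * vv n H l x"
proof -
  assume j: "j < n" and l: "l < n"
  have "(\<Sum>k<n. x k * (A_tensor n H i l x * kron j k)) = x j * A_tensor n H i l x" for i
    using sum_kron'[OF j, of "\<lambda>k. x k * A_tensor n H i l x"] by (simp add: algebra_simps)
  then have "(\<Sum>i<n. \<Sum>k<n. x i * x k * (A_tensor n H i l x * kron j k)) = (\<Sum>i<n. x i * (x j * A_tensor n H i l x))"
    by (simp add: dsum)
  also have "\<dots> = x j * vv n H l x" unfolding vv_def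
    using l by (simp add: sum_distrib_left algebra_simps A_sym)
  finally show ?thesis .
qed

lemma T4: "(\<Sum>i<n. \<Sum>k<n. x i * x k * (A_tensor n H i k x * kron j l)) = kron j l * ph n H x"
  unfolding ph_def by (simp add: sum_distrib_left sum_distrib_right algebra_simps)

lemma contr: assumes x: "x \<in> boundary n" and j: "j < n - 1" and l: "l < n - 1"
  shows "real m * (real m + 1) * H j l x + (1 / (real n - 2)) *
     (sq n x * A_tensor n H j l x - x l * vv n H j x - x j * vv n H l x + kron j l * ph n H x) = 0"
proof -
  define c2 where "c2 = 1 / (real n - 2)"
  have jn: "j < n" and ln: "l < n" using j l by auto
  have z: "(\<Sum>i<n. \<Sum>k<n. x i * x k * Z_tensor n H i j k l x) = 0" using Z0 jn ln by simp
  have e: "x i * x k * Z_tensor n H i j k l x =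
     x i * x k * pd i (pd k (H j l)) x - x i * x k * pd i (pd l (H j k)) x
     - x i * x k * pd j (pd k (H i l)) x + x i * x k * pd j (pd l (H i k)) x
     + c2 * (x i * x k * (A_tensor n H j l x * kron i k) - x i * x k * (A_tensor n H j k x * kron i l)
       - x i * x k * (A_tensor n H i l x * kron j k) + x i * x k * (A_tensor n H i k x * kron j l))" for i k
    unfolding Z_tensor_def c2_def by (simp add: algebra_simps)
  define E where "E i k = x i * x k * (A_tensor n H j l x * kron i k) - x i * x k * (A_tensor n H j k x * kron i l)
       - x i * x k * (A_tensor n H i l x * kron j k) + x i * x k * (A_tensor n H i k x * kron j l)" for i k
  have eE: "(\<Sum>i<n. \<Sum>k<n. E i k) = (\<Sum>i<n. \<Sum>k<n. x i * x k * (A_tensor n H j l x * kron i k)) - (\<Sum>i<n. \<Sum>k<n. x i * x k * (A_tensor n H j k x * kron i l))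
       - (\<Sum>i<n. \<Sum>k<n. x i * x k * (A_tensor n H i l x * kron j k)) + (\<Sum>i<n. \<Sum>k<n. x i * x k * (A_tensor n H i k x * kron j l))"
    unfolding E_def by (simp add: sum.distrib sum_subtractf)
  have cE: "(\<Sum>i<n. \<Sum>k<n. c2 * E i k) = c2 * (\<Sum>i<n. \<Sum>k<n. E i k)"
    by (simp add: sum_distrib_left)
  have "(\<Sum>i<n. \<Sum>k<n. x i * x k * Z_tensor n H i j k l x) =
     (\<Sum>i<n. \<Sum>k<n. x i * x k * pd i (pd k (H j l)) x) - (\<Sum>i<n. \<Sum>k<n. x i * x k * pd i (pd l (H j k)) x)
     - (\<Sum>i<n. \<Sum>k<n. x i * x k * pd j (pd k (H i l)) x) + (\<Sum>i<n. \<Sum>k<n. x i * x k * pd j (pd l (H i k)) x)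
     + (\<Sum>i<n. \<Sum>k<n. c2 * E i k)"
    unfolding e E_def by (simp add: sum.distrib sum_subtractf)
  also have "\<dots> = (\<Sum>i<n. \<Sum>k<n. x i * x k * pd i (pd k (H j l)) x) - (\<Sum>i<n. \<Sum>k<n. x i * x k * pd i (pd l (H j k)) x)
     - (\<Sum>i<n. \<Sum>k<n. x i * x k * pd j (pd k (H i l)) x) + (\<Sum>i<n. \<Sum>k<n. x i * x k * pd j (pd l (H i k)) x)
     + c2 * ((\<Sum>i<n. \<Sum>k<n. x i * x k * (A_tensor n H j l x * kron i k)) - (\<Sum>i<n. \<Sum>k<n. x i * x k * (A_tensor n H j k x * kron i l))
       - (\<Sum>i<n. \<Sum>k<n. x i * x k * (A_tensor n H i l x * kron j k)) + (\<Sum>i<n. \<Sum>k<n. x i * x k * (A_tensor n H i k x * kron j l)))"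
    unfolding cE eE ..
  also have "\<dots> = real m * (real m - 1) * H j l x + (real m - 1) * H j l x + (real m - 1) * H j l x + 2 * H j l x
     + c2 * (sq n x * A_tensor n H j l x - x l * vv n H j x - x j * vv n H l x + kron j l * ph n H x)"
    unfolding S1 S2[OF x jn l] S3[OF x j ln] S4[OF x j l] T1 T2[OF ln] T3[OF jn ln] T4 by (simp add: algebra_simps)
  finally show ?thesis using z unfolding c2_def by (simp add: algebra_simps)
qed

lemma A_fun_sym: "i < n \<Longrightarrow> k < n \<Longrightarrow> A_tensor n H i k = A_tensor n H k i"
  using A_sym by auto

lemma hp_ph: "hp n m (ph n H)"
proof -
  have "hp n m (\<lambda>x. x i * x k * A_tensor n H i k x)" if "i < n" "k < n" for i k
  proof -
    have "hp n (1 + 1 + (m - 2)) (\<lambda>x. x i * x k * A_tensor n H i k x)"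
      by (intro hp.hmul hp.hx hpA that)
    moreover have "1 + 1 + (m - 2) = m" using m2 by simp
    ultimately show ?thesis by simp
  qed
  then show ?thesis unfolding ph_def[abs_def]
    by (intro hp_sum) auto
qed

lemma pd_vv: assumes b: "b < n" and d: "d < n"
  shows "pd d (vv n H b) x = (real m - 1) * A_tensor n H b d x"
proof -
  have "pd d (vv n H b) x = (\<Sum>k<n. (if d = k then 1 else 0) * A_tensor n H b k x + x k * pd d (A_tensor n H b k) x)"
    unfolding vv_def[abs_def] by (simp add: pd_sum pd_mult)
  also have "\<dots> = A_tensor n H b d x + (\<Sum>k<n. x k * pd k (A_tensor n H b d) x)"
    using d b cotton[OF b d] by (simp add: sum.distrib sum_ind2)
  also have "\<dots> = (real m - 1) * A_tensor n H b d x" by (simp add: eulA algebra_simps)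
  finally show ?thesis .
qed

lemma pd_ph: assumes b: "b < n"
  shows "pd b (ph n H) x = real m * vv n H b x"
proof -
  have "pd b (ph n H) x = (\<Sum>i<n. \<Sum>k<n. ((if b = i then 1 else 0) * x k + x i * (if b = k then 1 else 0)) * A_tensor n H i k x
       + x i * x k * pd b (A_tensor n H i k) x)"
    unfolding ph_def[abs_def] by (simp add: pd_sum pd_mult)
  also have "\<dots> = (\<Sum>i<n. (if b = i then 1 else 0) * (\<Sum>k<n. x k * A_tensor n H i k x))
       + (\<Sum>i<n. x i * (\<Sum>k<n. (if b = k then 1 else 0) * A_tensor n H i k x))
       + (\<Sum>k<n. x k * (\<Sum>i<n. x i * pd b (A_tensor n H i k) x))"
    apply (simp add: sum.distrib sum_distrib_left algebra_simps)
    apply (subst (2) sum.swap)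
    apply (simp add: algebra_simps)
    done
  also have "\<dots> = vv n H b x + vv n H b x + (\<Sum>k<n. x k * (\<Sum>i<n. x i * pd i (A_tensor n H b k) x))"
  proof -
    have 1: "(\<Sum>i<n. (if b = i then 1 else 0) * (\<Sum>k<n. x k * A_tensor n H i k x)) = vv n H b x"
      using b by (simp add: sum_ind2 vv_def)
    have 2: "(\<Sum>i<n. x i * (\<Sum>k<n. (if b = k then 1 else 0) * A_tensor n H i k x)) = vv n H b x"
      using b by (simp add: sum_ind2 vv_def A_sym)
    have 3: "pd b (A_tensor n H i k) x = pd i (A_tensor n H b k) x" if "i < n" "k < n" for i k
      using cotton[OF that(2) b that(1)] A_fun_sym[OF that] A_fun_sym[OF that(2) b] by simp
    have "(\<Sum>k<n. x k * (\<Sum>i<n. x i * pd b (A_tensor n H i k) x)) = (\<Sum>k<n. x k * (\<Sum>i<n. x i * pd i (A_tensor n H b k) x))"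
      by (intro sum.cong refl) (simp add: 3)
    then show ?thesis using 1 2 by simp
  qed
  also have "\<dots> = real m * vv n H b x"
  proof -
    have "(\<Sum>k<n. x k * (\<Sum>i<n. x i * pd i (A_tensor n H b k) x)) = (\<Sum>k<n. x k * ((real m - 2) * A_tensor n H b k x))"
      by (simp add: eulA)
    also have "\<dots> = (real m - 2) * vv n H b x" by (simp add: vv_def sum_distrib_left algebra_simps)
    finally show ?thesis by (simp add: algebra_simps)
  qed
  finally show ?thesis .
qed

lemma pd_ph_fun: "b < n \<Longrightarrow> pd b (ph n H) = (\<lambda>x. real m * vv n H b x)"
  using pd_ph by auto

lemma hess_ph: "b < n \<Longrightarrow> d < n \<Longrightarrow> pd d (pd b (ph n H)) x = real m * (real m - 1) * A_tensor n H b d x"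
proof -
  assume b: "b < n" and d: "d < n"
  have "lined (vv n H b)" unfolding vv_def[abs_def] by simp
  then show ?thesis using pd_ph_fun[OF b] pd_vv[OF b d] by (simp add: pd_cmult)
qed

lemma xnu: "x \<in> boundary n \<Longrightarrow> x (n - 1) = 0" by (simp add: boundary_def)

lemma trace_rel: assumes x: "x \<in> boundary n"
  shows "(real n - 3) * ph n H x = - sq n x * (\<Sum>j<n - 1. A_tensor n H j j x)"
proof -
  have n1: "1 \<le> n" using n6 by simp
  have h0: "(\<Sum>j<n - 1. H j j x) = 0"
    using trH[of x] sum_split_last[OF n1, of "\<lambda>j. H j j x"] HnH[of "n - 1" x] n1 by simp
  have vsum: "(\<Sum>j<n - 1. x j * vv n H j x) = ph n H x"
  proof -
    have "(\<Sum>j<n. x j * vv n H j x) = (\<Sum>j<n - 1. x j * vv n H j x)"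
      using sum_split_last[OF n1, of "\<lambda>j. x j * vv n H j x"] xnu[OF x] by simp
    moreover have "(\<Sum>j<n. x j * vv n H j x) = ph n H x"
      unfolding vv_def ph_def by (simp add: sum_distrib_left algebra_simps)
    ultimately show ?thesis by simp
  qed
  have kr: "(\<Sum>j<n - 1. kron j j * ph n H x) = (real n - 1) * ph n H x"
    using n1 by (simp add: kron_def)
  have "(\<Sum>j<n - 1. real m * (real m + 1) * H j j x + (1 / (real n - 2)) *
     (sq n x * A_tensor n H j j x - x j * vv n H j x - x j * vv n H j x + kron j j * ph n H x)) = 0"
  proof (rule sum.neutral, rule ballI)
    fix j assume "j \<in> {..<n - 1}"
    then show "real m * (real m + 1) * H j j x + (1 / (real n - 2)) *
     (sq n x * A_tensor n H j j x - x j * vv n H j x - x j * vv n H j x + kron j j * ph n H x) = 0"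
      using contr[OF x, of j j] by simp
  qed
  then have "real m * (real m + 1) * (\<Sum>j<n - 1. H j j x) + (1 / (real n - 2)) *
     (sq n x * (\<Sum>j<n - 1. A_tensor n H j j x) - 2 * (\<Sum>j<n - 1. x j * vv n H j x) + (\<Sum>j<n - 1. kron j j * ph n H x)) = 0"
    by (simp add: sum.distrib sum_subtractf sum_distrib_left algebra_simps)
  then have "sq n x * (\<Sum>j<n - 1. A_tensor n H j j x) - 2 * ph n H x + (real n - 1) * ph n H x = 0"
    using h0 vsum kr n6 by simp
  then show ?thesis by (simp add: algebra_simps)
qed

lemma ph_zero: "\<forall>x\<in>boundary n. ph n H x = 0"
proof -
  define \<mu> where "\<mu> = - 1 / ((real n - 3) * (real m * (real m - 1)))"
  have pos: "(real n - 3) * (real m * (real m - 1)) > 0" using n6 m2 by simp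
  have mu: "\<mu> \<le> 0" unfolding \<mu>_def using pos by (simp add: divide_nonpos_pos)
  have Ltph: "Lt n (ph n H) x = real m * (real m - 1) * (\<Sum>j<n - 1. A_tensor n H j j x)" for x
    unfolding Lt_def by (simp add: hess_ph sum_distrib_left)
  have rel: "\<forall>x\<in>boundary n. ph n H x = \<mu> * sq n x * Lt n (ph n H) x"
  proof
    fix x assume x: "x \<in> boundary n"
    define \<tau> where "\<tau> = (\<Sum>j<n - 1. A_tensor n H j j x)"
    have n3: "real n - 3 > 0" using n6 by simp
    have mm: "real m * (real m - 1) \<noteq> 0" using m2 by simp
    have "(real n - 3) * ph n H x = - sq n x * \<tau>" unfolding \<tau>_def by (rule trace_rel[OF x])
    then have eq: "ph n H x = - sq n x * \<tau> / (real n - 3)" using n3 by (simp add: field_simps)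
    have "\<mu> * sq n x * (real m * (real m - 1) * \<tau>) = - sq n x * \<tau> / (real n - 3)"
      unfolding \<mu>_def using mu_aux[OF mm] by simp
    then show "ph n H x = \<mu> * sq n x * Lt n (ph n H) x"
      unfolding Ltph \<tau>_def[symmetric] using eq by simp
  qed
  show ?thesis using recur[of n m] n6 hp_ph mu rel by auto
qed

lemma A_zero_B: assumes x: "x \<in> boundary n" and b: "b < n - 1" and d: "d < n - 1"
  shows "A_tensor n H b d x = 0"
proof -
  have "\<forall>y\<in>boundary n. pd b (ph n H) y = 0"
    using pd_B_zero[of n "ph n H" b] ph_zero b by auto
  then have "pd d (pd b (ph n H)) x = 0" using pd_B_zero[of n "pd b (ph n H)" d x] x d by auto
  then have "real m * (real m - 1) * A_tensor n H b d x = 0" using hess_ph[of b d x] b d by simp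
  then show ?thesis using m2 by simp
qed

lemma vv_zero_B: assumes x: "x \<in> boundary n" and j: "j < n - 1"
  shows "vv n H j x = 0"
proof -
  have n1: "1 \<le> n" using n6 by simp
  have "vv n H j x = (\<Sum>k<n - 1. x k * A_tensor n H j k x) + x (n - 1) * A_tensor n H j (n - 1) x"
    unfolding vv_def by (rule sum_split_last[OF n1])
  then show ?thesis using A_zero_B[OF x j] xnu[OF x] by simp
qed

lemma H_zero_B: assumes x: "x \<in> boundary n" and j: "j < n - 1" and l: "l < n - 1"
  shows "H j l x = 0"
proof -
  have "real m * (real m + 1) * H j l x = 0"
    using contr[OF x j l] A_zero_B[OF x j l] vv_zero_B[OF x j] vv_zero_B[OF x l] ph_zero x by simp
  then show ?thesis using m2 by simp
qed

end

definition RR :: "nat \<Rightarrow> (nat \<Rightarrow> nat \<Rightarrow> (nat \<Rightarrow> real) \<Rightarrow> real) \<Rightarrow> nat \<Rightarrow> nat \<Rightarrow> (nat \<Rightarrow> real) \<Rightarrow> real" where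
  "RR n G j l x = (\<Sum>m<n. pd j (pd m (G m l)) x) + (\<Sum>m<n. pd l (pd m (G m j)) x)
     - (\<Sum>m<n - 1. pd m (pd m (G j l)) x)
     - 2 / (real n - 1) * (\<Sum>m<n. \<Sum>p<n. pd m (pd p (G m p)) x) * kron j l"

lemma c3: "polyf f \<Longrightarrow> pd i (pd a (pd b f)) x = pd a (pd b (pd i f)) x"
  by (metis pd_comm polyf_pd)

lemma RR_pd: assumes "\<And>c d. polyf (G c d)"
  shows "pd i (RR n G j l) x = RR n (\<lambda>c d. pd i (G c d)) j l x"
proof -
  have "pd i (RR n G j l) x = (\<Sum>m<n. pd i (pd j (pd m (G m l))) x) + (\<Sum>m<n. pd i (pd l (pd m (G m j))) x)
     - (\<Sum>m<n - 1. pd i (pd m (pd m (G j l))) x)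
     - 2 / (real n - 1) * (\<Sum>m<n. \<Sum>p<n. pd i (pd m (pd p (G m p))) x) * kron j l"
    unfolding RR_def[abs_def] using assms by (simp add: pd_sum pd_add pd_minus pd_mult pd_div)
  also have "\<dots> = RR n (\<lambda>c d. pd i (G c d)) j l x"
  proof -
    have a: "\<And>m. pd i (pd j (pd m (G m l))) x = pd j (pd m (pd i (G m l))) x" using c3 assms by blast
    have b: "\<And>m. pd i (pd l (pd m (G m j))) x = pd l (pd m (pd i (G m j))) x" using c3 assms by blast
    have c: "\<And>m. pd i (pd m (pd m (G j l))) x = pd m (pd m (pd i (G j l))) x" using c3 assms by blast
    have d: "\<And>m p. pd i (pd m (pd p (G m p))) x = pd m (pd p (pd i (G m p))) x" using c3 assms by blast
    show ?thesis unfolding RR_def by (simp only: a b c d)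
  qed
  finally show ?thesis .
qed

lemma pRR: "(\<And>c d. polyf (G c d)) \<Longrightarrow> polyf (RR n G j l)"
  unfolding RR_def[abs_def] by simp

lemma tv: assumes "\<forall>y\<in>boundary n. f y = 0" "a < n - 1" "b < n - 1" "x \<in> boundary n"
  shows "pd a (pd b f) x = 0"
proof -
  have "\<forall>y\<in>boundary n. pd b f y = 0" using pd_B_zero[of n f b] assms by auto
  then show ?thesis using pd_B_zero[of n "pd b f" a x] assms by auto
qed

lemma term0: assumes G0: "\<forall>c<n. \<forall>x. G c (n - 1) x = 0 \<and> G (n - 1) c x = 0"
    and GB: "\<forall>c<n. \<forall>d<n. \<forall>x\<in>boundary n. G c d x = 0"
    and x: "x \<in> boundary n" and c: "c < n" and d: "d < n"
    and ab: "a < n - 1" "b < n - 1 \<or> c = n - 1 \<or> d = n - 1"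
  shows "pd a (pd b (G c d)) x = 0"
proof (cases "c = n - 1 \<or> d = n - 1")
  case True
  then have "G c d = (\<lambda>x. 0)" using G0 c d by auto
  then show ?thesis by simp
next
  case False
  then have "b < n - 1" using ab by auto
  then show ?thesis using tv[of n "G c d" a b x] GB c d x ab by auto
qed

lemma RR_B: assumes n1: "1 \<le> n"
    and G0: "\<forall>c<n. \<forall>x. G c (n - 1) x = 0 \<and> G (n - 1) c x = 0"
    and GB: "\<forall>c<n. \<forall>d<n. \<forall>x\<in>boundary n. G c d x = 0"
    and x: "x \<in> boundary n" and j: "j < n - 1" and l: "l < n - 1"
  shows "RR n G j l x = 0"
proof -
  have mlt: "m < n \<Longrightarrow> m < n - 1 \<or> m = n - 1" for m by auto
  have t1: "(\<Sum>m<n. pd j (pd m (G m l)) x) = 0"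
    by (rule sum.neutral) (use term0[OF G0 GB x] j l mlt in force)
  have t2: "(\<Sum>m<n. pd l (pd m (G m j)) x) = 0"
    by (rule sum.neutral) (use term0[OF G0 GB x] j l mlt in force)
  have t3: "(\<Sum>m<n - 1. pd m (pd m (G j l)) x) = 0"
    by (rule sum.neutral) (use term0[OF G0 GB x] j l in force)
  have t4: "(\<Sum>m<n. \<Sum>p<n. pd m (pd p (G m p)) x) = 0"
  proof (rule sum.neutral, rule ballI)
    fix m assume m: "m \<in> {..<n}"
    show "(\<Sum>p<n. pd m (pd p (G m p)) x) = 0"
    proof (cases "m = n - 1")
      case True
      then have "G m p = (\<lambda>x. 0)" if "p < n" for p using G0 that by auto
      then show ?thesis by simp
    next
      case False
      then have "m < n - 1" using m by auto
      then show ?thesis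
        by (intro sum.neutral ballI) (use term0[OF G0 GB x] m mlt in force)
    qed
  qed
  show ?thesis unfolding RR_def t1 t2 t3 t4 by simp
qed

lemma pd_neg: "lined f \<Longrightarrow> pd i (\<lambda>x. - f x) = (\<lambda>x. - pd i f x)"
  using pd_cmult[of f i "-1"] by simp

lemma line_zero:
  assumes l1: "lined f" and l2: "lined (pd i f)"
    and dd: "\<And>y. pd i (pd i f) y = 0"
    and b0: "f (x(i := 0)) = 0" and b1: "pd i f (x(i := 0)) = 0"
  shows "f x = 0"
proof -
  have "\<forall>t. ((\<lambda>s. pd i f (x(i:=s))) has_real_derivative 0) (at t)"
    using lined_D[OF l2, of x i] dd by simp
  then have c1: "pd i f (x(i:=t)) = pd i f (x(i:=0))" for t
    using DERIV_isconst_all by blast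
  have "\<forall>t. ((\<lambda>s. f (x(i:=s))) has_real_derivative 0) (at t)"
    using lined_D[OF l1, of x i] c1 b1 by simp
  then have "f (x(i:= x i)) = f (x(i:=0))" using DERIV_isconst_all by blast
  then show ?thesis using b0 by simp
qed

lemma partIV:
  assumes n4: "4 \<le> n"
  shows "\<forall>G. (\<forall>c d. hp n e (G c d)) \<longrightarrow> (\<forall>c<n. \<forall>x. G c (n - 1) x = 0 \<and> G (n - 1) c x = 0)
    \<longrightarrow> (\<forall>j<n - 1. \<forall>l<n - 1. \<forall>x. (real n - 3) * pd (n - 1) (pd (n - 1) (G j l)) x = - RR n G j l x)
    \<longrightarrow> (\<forall>c<n. \<forall>d<n. \<forall>x\<in>boundary n. G c d x = 0 \<and> pd (n - 1) (G c d) x = 0)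
    \<longrightarrow> (\<forall>j<n - 1. \<forall>l<n - 1. \<forall>x. G j l x = 0)"
proof (induction e rule: less_induct)
  case (less e)
  show ?case
  proof (intro allI impI)
    fix G j l x
    assume hG: "\<forall>c d. hp n e (G c d)"
      and G0: "\<forall>c<n. \<forall>x. G c (n - 1) x = 0 \<and> G (n - 1) c x = 0"
      and rel: "\<forall>j<n - 1. \<forall>l<n - 1. \<forall>x. (real n - 3) * pd (n - 1) (pd (n - 1) (G j l)) x = - RR n G j l x"
      and GB: "\<forall>c<n. \<forall>d<n. \<forall>x\<in>boundary n. G c d x = 0 \<and> pd (n - 1) (G c d) x = 0"
      and j: "j < n - 1" and l: "l < n - 1"
    define \<nu> where "\<nu> = n - 1"
    have n1: "1 \<le> n" using n4 by simp
    have n3: "real n - 3 \<noteq> 0" using n4 by simp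
    have pG: "polyf (G c d)" for c d using hG hp_polyf by blast
    define G' where "G' c d = pd \<nu> (pd \<nu> (G c d))" for c d
    define G1 where "G1 c d = pd \<nu> (G c d)" for c d
    have pG1: "polyf (G1 c d)" for c d unfolding G1_def using pG by simp
    have Gz: "c < n \<Longrightarrow> G c \<nu> = (\<lambda>x. 0) \<and> G \<nu> c = (\<lambda>x. 0)" for c
      using G0 unfolding \<nu>_def by auto
    have funrel: "(\<lambda>x. (real n - 3) * pd \<nu> (pd \<nu> (G c d)) x) = (\<lambda>x. - RR n G c d x)"
      if "c < n - 1" "d < n - 1" for c d using rel that unfolding \<nu>_def by auto
    have RR1: "pd \<nu> (RR n G c d) = RR n G1 c d" for c d
      unfolding G1_def using RR_pd[OF pG] by auto
    have RR2: "pd \<nu> (RR n G1 c d) = RR n G' c d" for c d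
    proof -
      have "pd \<nu> (RR n G1 c d) = RR n (\<lambda>a b. pd \<nu> (G1 a b)) c d" using RR_pd[OF pG1] by auto
      then show ?thesis unfolding G1_def G'_def by simp
    qed
    have lRR: "lined (RR n G c d)" "lined (RR n G1 c d)" for c d using pRR[OF pG] pRR[OF pG1] by auto
    have rel1: "(real n - 3) * pd \<nu> (G' c d) x = - RR n G1 c d x" if "c < n - 1" "d < n - 1" for c d x
    proof -
      have "pd \<nu> (\<lambda>x. (real n - 3) * pd \<nu> (pd \<nu> (G c d)) x) x = pd \<nu> (\<lambda>x. - RR n G c d x) x"
        using funrel[OF that] by simp
      then show ?thesis unfolding G'_def using pG lRR by (simp add: pd_cmult pd_neg RR1)
    qed
    have rel2: "(real n - 3) * pd \<nu> (pd \<nu> (G' c d)) x = - RR n G' c d x" if "c < n - 1" "d < n - 1" for c d x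
    proof -
      have "(\<lambda>x. (real n - 3) * pd \<nu> (G' c d) x) = (\<lambda>x. - RR n G1 c d x)" using rel1[OF that] by auto
      then have "pd \<nu> (\<lambda>x. (real n - 3) * pd \<nu> (G' c d) x) x = pd \<nu> (\<lambda>x. - RR n G1 c d x) x"
        by simp
      moreover have "polyf (G' c d)" unfolding G'_def using pG by simp
      ultimately show ?thesis using lRR by (simp add: pd_cmult pd_neg RR2)
    qed
    have G'0: "G' c \<nu> = (\<lambda>x. 0) \<and> G' \<nu> c = (\<lambda>x. 0)" if "c < n" for c
      unfolding G'_def using Gz[OF that] by simp
    have G10: "G1 c \<nu> = (\<lambda>x. 0) \<and> G1 \<nu> c = (\<lambda>x. 0)" if "c < n" for c
      unfolding G1_def using Gz[OF that] by simp
    have GBv: "\<forall>c<n. \<forall>d<n. \<forall>x\<in>boundary n. G c d x = 0" using GB by auto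
    have G1B: "\<forall>c<n. \<forall>d<n. \<forall>x\<in>boundary n. G1 c d x = 0" using GB unfolding G1_def \<nu>_def by auto
    have G'B: "G' c d y = 0 \<and> pd \<nu> (G' c d) y = 0" if "c < n" "d < n" "y \<in> boundary n" for c d y
    proof (cases "c = \<nu> \<or> d = \<nu>")
      case True
      then have "G' c d = (\<lambda>x. 0)" using G'0 that by auto
      then show ?thesis by simp
    next
      case False
      then have cd: "c < n - 1" "d < n - 1" using that unfolding \<nu>_def by auto
      have "RR n G c d y = 0"
        by (rule RR_B[OF n1 _ GBv that(3) cd]) (use Gz in \<open>auto simp: \<nu>_def\<close>)
      moreover have "RR n G1 c d y = 0"
        by (rule RR_B[OF n1 _ G1B that(3) cd]) (use G10 in \<open>auto simp: \<nu>_def\<close>)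
      moreover have "(real n - 3) * G' c d y = - RR n G c d y"
        unfolding G'_def using rel cd unfolding \<nu>_def by auto
      ultimately show ?thesis using rel1[OF cd, of y] n3 by simp
    qed
    have G'z: "\<forall>j<n - 1. \<forall>l<n - 1. \<forall>x. G' j l x = 0"
    proof (cases "e < 2")
      case True
      have "pd \<nu> (pd \<nu> (G c d)) = (\<lambda>x. 0)" for c d using hp_low2[OF _ True] hG by blast
      then show ?thesis unfolding G'_def by simp
    next
      case False
      then have lt: "e - 2 < e" by simp
      have hG': "\<forall>c d. hp n (e - 2) (G' c d)" unfolding G'_def using hp_pd2 hG by blast
      show ?thesis
        using less.IH[OF lt, rule_format, of G'] hG' G'0 rel2 G'B unfolding \<nu>_def by auto
    qed
    show "G j l x = 0"
    proof (rule line_zero[of "G j l" \<nu>])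
      show "lined (G j l)" "lined (pd \<nu> (G j l))" using pG by auto
      show "pd \<nu> (pd \<nu> (G j l)) y = 0" for y using G'z j l unfolding G'_def \<nu>_def by auto
      have "x(\<nu> := 0) \<in> boundary n" unfolding boundary_def \<nu>_def by simp
      then show "G j l (x(\<nu> := 0)) = 0" "pd \<nu> (G j l) (x(\<nu> := 0)) = 0"
        using GB j l unfolding \<nu>_def by auto
    qed
  qed
qed

context HS begin

lemma Hz_fun: "c < n \<Longrightarrow> H c (n - 1) = (\<lambda>x. 0) \<and> H (n - 1) c = (\<lambda>x. 0)"
proof -
  assume c: "c < n"
  have n1: "n - 1 < n" using n6 by simp
  have "H c (n - 1) = (\<lambda>x. 0)" using HnH[OF c] by auto
  moreover have "H (n - 1) c = H c (n - 1)" using symH[OF n1 c] .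
  ultimately show ?thesis by simp
qed

lemma relH: assumes j: "j < n - 1" and l: "l < n - 1"
  shows "(real n - 3) * pd (n - 1) (pd (n - 1) (H j l)) x = - RR n H j l x"
proof -
  define \<nu> where "\<nu> = n - 1"
  have n1: "1 \<le> n" and nu: "\<nu> < n" using n6 unfolding \<nu>_def by auto
  have jn: "j < n" and ln: "l < n" using j l by auto
  define c where "c = 1 / (real n - 1)"
  define c2 where "c2 = 1 / (real n - 2)"
  define Q where "Q = pd \<nu> (pd \<nu> (H j l)) x"
  define P where "P = pd j (dH n H l) x + pd l (dH n H j) x"
  define L' where "L' = (\<Sum>m<n - 1. pd m (pd m (H j l)) x)"
  define D where "D = DD n H x"
  define \<kappa> where "\<kappa> = kron j l"
  have z: "Z_tensor n H j \<nu> l \<nu> x = 0" using Z0 jn ln nu by simp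
  have H0: "H \<nu> \<nu> = (\<lambda>x. 0)" "H \<nu> l = (\<lambda>x. 0)" "H j \<nu> = (\<lambda>x. 0)"
    using Hz_fun[OF nu] Hz_fun[OF ln] Hz_fun[OF jn] unfolding \<nu>_def by auto
  have k0: "kron j \<nu> = 0" "kron \<nu> l = 0" "kron \<nu> \<nu> = 1" using j l unfolding kron_def \<nu>_def by auto
  have dHnu: "dH n H \<nu> = (\<lambda>x. 0)"
  proof
    fix y show "dH n H \<nu> y = 0" unfolding dH_def using Hz_fun unfolding \<nu>_def by simp
  qed
  have Ann: "A_tensor n H \<nu> \<nu> x = - c * D"
    using A_eq[OF nu nu, of x] H0 k0 dHnu unfolding c_def D_def by (simp add: Lap_def)
  have Lsplit: "Lap n (H j l) x = L' + Q"
    unfolding Lap_def L'_def Q_def \<nu>_def by (rule sum_split_last[OF n1])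
  have Ajl: "A_tensor n H j l x = P - (L' + Q) - c * D * \<kappa>"
    using A_eq[OF jn ln, of x] Lsplit unfolding P_def c_def D_def \<kappa>_def by simp
  have "Z_tensor n H j \<nu> l \<nu> x = Q + c2 * (A_tensor n H \<nu> \<nu> x * \<kappa> + A_tensor n H j l x)"
    unfolding Z_tensor_def Q_def c2_def \<kappa>_def using H0 k0 by simp
  then have "Q + c2 * (- c * D * \<kappa> + (P - (L' + Q) - c * D * \<kappa>)) = 0"
    using z Ann Ajl by simp
  then have "(real n - 2) * Q + (- c * D * \<kappa> + (P - (L' + Q) - c * D * \<kappa>)) = 0"
    unfolding c2_def using n6 by (simp add: field_simps)
  then have "(real n - 3) * Q = - (P - L' - 2 * c * D * \<kappa>)" by (simp add: algebra_simps)
  moreover have "RR n H j l x = P - L' - 2 * c * D * \<kappa>"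
    unfolding RR_def P_def L'_def D_def \<kappa>_def c_def DD_def by (simp add: pd_dH)
  ultimately show ?thesis unfolding Q_def \<nu>_def by simp
qed

lemma H_zero: assumes j: "j < n - 1" and l: "l < n - 1"
  shows "H j l x = 0"
proof -
  have n4: "4 \<le> n" using n6 by simp
  have G0: "\<forall>c<n. \<forall>x. H c (n - 1) x = 0 \<and> H (n - 1) c x = 0" using Hz_fun by simp
  have rel: "\<forall>j<n - 1. \<forall>l<n - 1. \<forall>x. (real n - 3) * pd (n - 1) (pd (n - 1) (H j l)) x = - RR n H j l x"
    using relH by blast
  have GB: "\<forall>c<n. \<forall>d<n. \<forall>x\<in>boundary n. H c d x = 0 \<and> pd (n - 1) (H c d) x = 0"
  proof (intro allI impI ballI conjI)
    fix c d x assume c: "c < n" and d: "d < n" and x: "x \<in> boundary n"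
    show "pd (n - 1) (H c d) x = 0" using b2 c d x by simp
    show "H c d x = 0"
    proof (cases "c = n - 1 \<or> d = n - 1")
      case True then show ?thesis using Hz_fun c d by auto
    next
      case False
      then have "c < n - 1" "d < n - 1" using c d by auto
      then show ?thesis using H_zero_B[OF x] by simp
    qed
  qed
  show ?thesis using partIV[OF n4, rule_format, of m H] hpH G0 rel GB j l by blast
qed

end

lemma LIN:
  assumes fE: "finite E" and inj: "inj_on dg E"
    and hom: "\<And>e x s. e \<in> E \<Longrightarrow> s > 0 \<Longrightarrow> x \<in> S \<Longrightarrow> g e (scale s x) = s ^ dg e * g e x"
    and Sc: "\<And>x s. x \<in> S \<Longrightarrow> s > 0 \<Longrightarrow> scale s x \<in> S"
    and sum0: "\<And>x. x \<in> S \<Longrightarrow> (\<Sum>e\<in>E. g e x) = 0"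
    and e0: "e0 \<in> E" and x: "x \<in> S"
  shows "g e0 x = (0::real)"
proof -
  define p where "p = (\<Sum>e\<in>E. Polynomial.monom (g e x) (dg e))"
  have "poly p s = 0" if "s > 0" for s
  proof -
    have "poly p s = (\<Sum>e\<in>E. g e x * s ^ dg e)" unfolding p_def by (simp add: poly_sum poly_monom)
    also have "\<dots> = (\<Sum>e\<in>E. g e (scale s x))" using hom that x by (simp add: mult.commute)
    also have "\<dots> = 0" using sum0 Sc x that by simp
    finally show ?thesis .
  qed
  then have "{0<..} \<subseteq> {s. poly p s = 0}" by auto
  then have "p = 0" using poly_roots_finite[of p] infinite_Ioi[of "0::real"] finite_subset by blast
  then have "coeff p (dg e0) = 0" by simp
  moreover have "coeff p (dg e0) = (\<Sum>e\<in>E. if dg e = dg e0 then g e x else 0)"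
    unfolding p_def by (simp add: coeff_sum)
  moreover have "(\<Sum>e\<in>E. if dg e = dg e0 then g e x else 0) = (\<Sum>e\<in>E. if e = e0 then g e x else 0)"
    using inj e0 by (intro sum.cong refl) (auto simp: inj_on_def)
  ultimately show ?thesis using fE e0 by simp
qed

lemma Z_cong:
  assumes eq: "\<And>a b. a < n \<Longrightarrow> b < n \<Longrightarrow> H a b = H2 a b"
    and "i < n" "j < n" "k < n" "l < n"
  shows "Z_tensor n H i j k l x = Z_tensor n H2 i j k l x"
proof -
  have A: "A_tensor n H a b y = A_tensor n H2 a b y" if "a < n" "b < n" for a b y
  proof -
    have 1: "(\<Sum>m<n. pd a (pd m (H m b)) y) = (\<Sum>m<n. pd a (pd m (H2 m b)) y)"
      by (rule sum.cong) (auto simp: eq that)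
    have 2: "(\<Sum>m<n. pd m (pd b (H a m)) y) = (\<Sum>m<n. pd m (pd b (H2 a m)) y)"
      by (rule sum.cong) (auto simp: eq that)
    have 3: "(\<Sum>m<n. pd m (pd m (H a b)) y) = (\<Sum>m<n. pd m (pd m (H2 a b)) y)"
      by (rule sum.cong) (auto simp: eq that)
    have 4: "(\<Sum>m<n. \<Sum>p<n. pd m (pd p (H m p)) y) = (\<Sum>m<n. \<Sum>p<n. pd m (pd p (H2 m p)) y)"
      by (intro sum.cong refl) (auto simp: eq that)
    show ?thesis unfolding A_tensor_def 1 2 3 4 ..
  qed
  show ?thesis unfolding Z_tensor_def using assms A by simp
qed

lemma A_lin:
  assumes fE: "finite E" and p: "\<And>e i k. polyf (F e i k)"
  shows "A_tensor n (\<lambda>i k x. \<Sum>e\<in>E. F e i k x) i k x = (\<Sum>e\<in>E. A_tensor n (F e) i k x)"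
proof -
  have pd2: "pd a (pd b (\<lambda>x. \<Sum>e\<in>E. F e c d x)) y = (\<Sum>e\<in>E. pd a (pd b (F e c d)) y)" for a b c d y
    using p by (simp add: pd_sum)
  have s1: "(\<Sum>m<n. \<Sum>e\<in>E. f m e) = (\<Sum>e\<in>E. \<Sum>m<n. f m e)" for f :: "nat \<Rightarrow> _ \<Rightarrow> real"
    by (rule sum.swap)
  have s2: "(\<Sum>m<n. \<Sum>p<n. \<Sum>e\<in>E. f m p e) = (\<Sum>e\<in>E. \<Sum>m<n. \<Sum>p<n. f m p e)" for f :: "nat \<Rightarrow> nat \<Rightarrow> _ \<Rightarrow> real"
    by (simp add: s1)
  show ?thesis unfolding A_tensor_def pd2 s1 s2
    by (simp add: sum.distrib sum_subtractf sum_distrib_left sum_distrib_right sum_divide_distrib)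
qed

lemma Z_lin:
  assumes fE: "finite E" and p: "\<And>e i k. polyf (F e i k)"
  shows "Z_tensor n (\<lambda>i k x. \<Sum>e\<in>E. F e i k x) i j k l x = (\<Sum>e\<in>E. Z_tensor n (F e) i j k l x)"
proof -
  have pd2: "pd a (pd b (\<lambda>x. \<Sum>e\<in>E. F e c d x)) y = (\<Sum>e\<in>E. pd a (pd b (F e c d)) y)" for a b c d y
    using p by (simp add: pd_sum)
  show ?thesis unfolding Z_tensor_def pd2 A_lin[OF fE p]
    by (simp add: sum.distrib sum_subtractf sum_distrib_left sum_distrib_right sum_divide_distrib
        diff_divide_distrib add_divide_distrib)
qed

lemma hp_A: assumes "\<And>i k. hp n e (F i k)" shows "hp n (e - 2) (A_tensor n F i k)"
  unfolding A_tensor_def[abs_def]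
  by (intro hp_minus hp.hadd hp_sum hp_pd2[OF assms] hp_multc hp_divc hp_cmult)

lemma hp_Z: assumes "\<And>i k. hp n e (F i k)" shows "hp n (e - 2) (Z_tensor n F i j k l)"
  unfolding Z_tensor_def[abs_def]
  by (intro hp_minus hp.hadd hp_sum hp_pd2[OF assms] hp_multc hp_divc hp_cmult hp_A[OF assms])



lemma ext_half:
  assumes h: "hp n e f" and z: "\<forall>x\<in>half_space n. f x = 0"
  shows "f x = 0"
proof (cases "x \<in> half_space n")
  case True then show ?thesis using z by simp
next
  case False
  then have "scale (-1) x \<in> half_space n" unfolding half_space_def scale_def by simp
  then have "f (scale (-1) x) = 0" using z by simp
  then show ?thesis using hp_scale[OF h, of "-1" x] by simp
qed

lemma scale_half: "x \<in> half_space n \<Longrightarrow> s > 0 \<Longrightarrow> scale s x \<in> half_space n"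
  unfolding half_space_def scale_def by simp
lemma scale_bd: "x \<in> boundary n \<Longrightarrow> s > 0 \<Longrightarrow> scale s x \<in> boundary n"
  unfolding boundary_def scale_def by simp

lemma LIN2:
  assumes fE: "finite E" and inj: "inj_on dg E"
    and hp: "\<And>e. e \<in> E \<Longrightarrow> hp n (dg e) (g e)"
    and Sc: "\<And>x s. x \<in> S \<Longrightarrow> s > 0 \<Longrightarrow> scale s x \<in> S"
    and sum0: "\<And>x. x \<in> S \<Longrightarrow> (\<Sum>e\<in>E. g e x) = 0"
    and e0: "e0 \<in> E" and x: "x \<in> S"
  shows "g e0 x = 0"
  by (rule LIN[OF fE inj _ Sc sum0 e0 x]) (simp add: hp_scale[OF hp])

theorem proposition2p3:
  fixes n :: nat and H :: "nat \<Rightarrow> nat \<Rightarrow> (nat \<Rightarrow> real) \<Rightarrow> real"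
  assumes n6: "6 \<le> n"
    and poly: "\<exists>h :: nat \<Rightarrow> nat \<Rightarrow> (nat \<Rightarrow> nat) \<Rightarrow> real. \<forall>i<n. \<forall>k<n. \<forall>x.
                 H i k x = (\<Sum>\<alpha>\<in>multi_idx n ((n - 2) div 2). h i k \<alpha> * monom n \<alpha> x)"
    and sym: "\<forall>i<n. \<forall>k<n. \<forall>x. H i k x = H k i x"
    and trfree: "\<forall>x. (\<Sum>i<n. H i i x) = 0"
    and Hn: "\<forall>x\<in>half_space n. \<forall>i<n. H i (n - 1) x = 0"
    and bdry1: "\<forall>x\<in>boundary n. \<forall>i<n. (\<Sum>k<n. H i k x * x k) = 0"
    and bdry2: "\<forall>x\<in>boundary n. \<forall>i<n. \<forall>k<n. pd (n - 1) (H i k) x = 0"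
    and Z0: "\<forall>x\<in>half_space n. \<forall>i<n. \<forall>j<n. \<forall>k<n. \<forall>l<n. Z_tensor n H i j k l x = 0"
  shows "\<forall>x\<in>half_space n. \<forall>i<n - 1. \<forall>k<n - 1. H i k x = 0"
proof -
  obtain h :: "nat \<Rightarrow> nat \<Rightarrow> (nat \<Rightarrow> nat) \<Rightarrow> real" where
    hH: "\<forall>i<n. \<forall>k<n. \<forall>x. H i k x = (\<Sum>\<alpha>\<in>multi_idx n ((n - 2) div 2). h i k \<alpha> * monom n \<alpha> x)"
    using poly by blast
  define d where "d = (n - 2) div 2"
  define MI where "MI = multi_idx n d"
  define dg where "dg \<alpha> = sum \<alpha> {..<n}" for \<alpha> :: "nat \<Rightarrow> nat"
  have finMI: "finite MI"
  proof -
    have "MI \<subseteq> {\<alpha>. \<forall>j. (j \<in> {..<n} \<longrightarrow> \<alpha> j \<in> {..d}) \<and> (j \<notin> {..<n} \<longrightarrow> \<alpha> j = 0)}"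
    proof
      fix \<alpha> assume a: "\<alpha> \<in> MI"
      have "\<alpha> j \<le> d" if "j < n" for j
      proof -
        have "\<alpha> j \<le> sum \<alpha> {..<n}" by (rule member_le_sum) (use that in auto)
        then show ?thesis using a unfolding MI_def multi_idx_def by simp
      qed
      then show "\<alpha> \<in> {\<alpha>. \<forall>j. (j \<in> {..<n} \<longrightarrow> \<alpha> j \<in> {..d}) \<and> (j \<notin> {..<n} \<longrightarrow> \<alpha> j = 0)}"
        using a unfolding MI_def multi_idx_def by auto
    qed
    moreover have "finite {\<alpha>. \<forall>j. (j \<in> {..<n} \<longrightarrow> \<alpha> j \<in> {..d}) \<and> (j \<notin> {..<n} \<longrightarrow> \<alpha> j = 0)}"
      by (rule finite_set_of_finite_funs) auto
    ultimately show ?thesis by (rule finite_subset)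
  qed
  define DS where "DS = dg ` MI"
  have finDS: "finite DS" unfolding DS_def using finMI by simp
  have DS2: "e \<in> DS \<Longrightarrow> 2 \<le> e" for e unfolding DS_def MI_def multi_idx_def dg_def by auto
  define Hm where "Hm e i k x = (\<Sum>\<alpha>\<in>{\<alpha>. \<alpha> \<in> MI \<and> dg \<alpha> = e}. h i k \<alpha> * monom n \<alpha> x)" for e i k x
  define Hs where "Hs i k x = (\<Sum>e\<in>DS. Hm e i k x)" for i k x
  have hpHm: "hp n e (Hm e i k)" for e i k
  proof -
    have "hp n e (\<lambda>x. h i k \<alpha> * monom n \<alpha> x)" if "\<alpha> \<in> {\<alpha>. \<alpha> \<in> MI \<and> dg \<alpha> = e}" for \<alpha>
    proof -
      have "hp n (dg \<alpha>) (monom n \<alpha>)" unfolding dg_def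
        by (rule hp_monom) (use that in \<open>auto simp: MI_def multi_idx_def\<close>)
      then show ?thesis using that hp_cmult by auto
    qed
    then show ?thesis unfolding Hm_def[abs_def] by (rule hp_sum)
  qed
  have pHm: "polyf (Hm e i k)" for e i k using hpHm hp_polyf by blast
  have HHs: "H i k = Hs i k" if "i < n" "k < n" for i k
  proof
    fix x
    have "Hs i k x = (\<Sum>\<alpha>\<in>MI. h i k \<alpha> * monom n \<alpha> x)"
      unfolding Hs_def Hm_def DS_def by (rule sum.group[OF finMI]) (use finMI in auto)
    then show "H i k x = Hs i k x" using hH that unfolding MI_def d_def by simp
  qed
  have HHs_x: "H i k x = (\<Sum>e\<in>DS. Hm e i k x)" if "i < n" "k < n" for i k x
    using HHs[OF that] unfolding Hs_def by simp
  have inj_id: "inj_on (\<lambda>e. e) DS" by simp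
  have inj_p1: "inj_on (\<lambda>e. e + 1) DS" by (simp add: inj_on_def)
  have inj_m1: "inj_on (\<lambda>e. e - 1) DS"
  proof (rule inj_onI)
    fix a b assume a: "a \<in> DS" and b: "b \<in> DS" and ab: "a - 1 = b - 1"
    show "a = b" using DS2[OF a] DS2[OF b] ab by arith
  qed
  have inj_m2: "inj_on (\<lambda>e. e - 2) DS"
  proof (rule inj_onI)
    fix a b assume a: "a \<in> DS" and b: "b \<in> DS" and ab: "a - 2 = b - 2"
    show "a = b" using DS2[OF a] DS2[OF b] ab by arith
  qed
  have nu: "n - 1 < n" using n6 by simp
  have hs_half: "\<And>x s. x \<in> half_space n \<Longrightarrow> s > 0 \<Longrightarrow> scale s x \<in> half_space n" by (rule scale_half)
  have hs_bd: "\<And>x s. x \<in> boundary n \<Longrightarrow> s > 0 \<Longrightarrow> scale s x \<in> boundary n" by (rule scale_bd)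
  have hs_U: "\<And>x s. x \<in> (UNIV :: (nat \<Rightarrow> real) set) \<Longrightarrow> s > 0 \<Longrightarrow> scale s x \<in> UNIV" by simp
  have T_sym: "Hm e i k x = Hm e k i x" if e: "e \<in> DS" and ik: "i < n" "k < n" for e i k x
  proof -
    have "(\<lambda>e x. Hm e i k x - Hm e k i x) e x = 0"
    proof (rule LIN2[where g="\<lambda>e x. Hm e i k x - Hm e k i x", OF finDS inj_id _ hs_U _ e UNIV_I])
      show "hp n e' (\<lambda>x. Hm e' i k x - Hm e' k i x)" if "e' \<in> DS" for e' by (intro hp_minus hpHm)
      show "(\<Sum>e\<in>DS. Hm e i k x - Hm e k i x) = 0" if "x \<in> UNIV" for x
        using HHs_x[OF ik, of x] HHs_x[OF ik(2,1), of x] sym ik by (simp add: sum_subtractf)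
    qed
    then show ?thesis by simp
  qed
  have T_tr: "(\<Sum>i<n. Hm e i i x) = 0" if e: "e \<in> DS" for e x
  proof -
    have "(\<lambda>e x. \<Sum>i<n. Hm e i i x) e x = 0"
    proof (rule LIN2[where g="\<lambda>e x. \<Sum>i<n. Hm e i i x", OF finDS inj_id _ hs_U _ e UNIV_I])
      show "hp n e' (\<lambda>x. \<Sum>i<n. Hm e' i i x)" if "e' \<in> DS" for e' by (intro hp_sum hpHm)
      show "(\<Sum>e\<in>DS. \<Sum>i<n. Hm e i i x) = 0" if "x \<in> UNIV" for x
        using trfree HHs_x by (simp add: sum.swap[of _ DS])
    qed
    then show ?thesis by simp
  qed
  have T_Hn: "Hm e i (n - 1) x = 0" if e: "e \<in> DS" and i: "i < n" for e i x
  proof -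
    have "\<forall>x\<in>half_space n. (\<lambda>e x. Hm e i (n - 1) x) e x = 0"
    proof
      fix x assume x: "x \<in> half_space n"
      show "(\<lambda>e x. Hm e i (n - 1) x) e x = 0"
      proof (rule LIN2[where g="\<lambda>e x. Hm e i (n - 1) x", OF finDS inj_id _ hs_half _ e x])
        show "hp n e' (Hm e' i (n - 1))" if "e' \<in> DS" for e' by (rule hpHm)
        show "(\<Sum>e\<in>DS. Hm e i (n - 1) x) = 0" if "x \<in> half_space n" for x
          using Hn HHs_x[OF i nu, of x] that i by simp
      qed
    qed
    then show ?thesis using ext_half[OF hpHm] by simp
  qed
  have T_b1: "(\<Sum>k<n. Hm e i k x * x k) = 0" if e: "e \<in> DS" and i: "i < n" and x: "x \<in> boundary n" for e i x
  proof -
    have "(\<lambda>e x. \<Sum>k<n. Hm e i k x * x k) e x = 0"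
    proof (rule LIN2[where g="\<lambda>e x. \<Sum>k<n. Hm e i k x * x k", OF finDS inj_p1 _ hs_bd _ e x])
      show "hp n (e' + 1) (\<lambda>x. \<Sum>k<n. Hm e' i k x * x k)" if "e' \<in> DS" for e'
        by (intro hp_sum hp.hmul hpHm hp.hx) simp
      show "(\<Sum>e\<in>DS. \<Sum>k<n. Hm e i k x * x k) = 0" if "x \<in> boundary n" for x
      proof -
        have "(\<Sum>e\<in>DS. \<Sum>k<n. Hm e i k x * x k) = (\<Sum>k<n. (\<Sum>e\<in>DS. Hm e i k x) * x k)"
          by (simp add: sum.swap[of _ DS] sum_distrib_right)
        also have "\<dots> = (\<Sum>k<n. H i k x * x k)" using HHs_x i by simp
        finally show ?thesis using bdry1 that i by simp
      qed
    qed
    then show ?thesis by simp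
  qed
  have T_b2: "pd (n - 1) (Hm e i k) x = 0" if e: "e \<in> DS" and ik: "i < n" "k < n" and x: "x \<in> boundary n" for e i k x
  proof (rule LIN2[where g="\<lambda>e. pd (n - 1) (Hm e i k)", OF finDS inj_m1 _ hs_bd _ e x])
    show "hp n (e' - 1) (pd (n - 1) (Hm e' i k))" if "e' \<in> DS" for e' by (rule hp_pd[OF hpHm])
    show "(\<Sum>e\<in>DS. pd (n - 1) (Hm e i k) x) = 0" if "x \<in> boundary n" for x
    proof -
      have "pd (n - 1) (H i k) x = pd (n - 1) (\<lambda>x. \<Sum>e\<in>DS. Hm e i k x) x"
        using HHs[OF ik] unfolding Hs_def[abs_def] by simp
      also have "\<dots> = (\<Sum>e\<in>DS. pd (n - 1) (Hm e i k) x)" using pHm by (simp add: pd_sum)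
      finally show ?thesis using bdry2 that ik by simp
    qed
  qed
  have T_Z: "Z_tensor n (Hm e) i j k l x = 0" if e: "e \<in> DS" and ijkl: "i < n" "j < n" "k < n" "l < n" for e i j k l x
  proof -
    have "\<forall>x\<in>half_space n. Z_tensor n (Hm e) i j k l x = 0"
    proof
      fix x assume x: "x \<in> half_space n"
      show "Z_tensor n (Hm e) i j k l x = 0"
      proof (rule LIN2[where g="\<lambda>e. Z_tensor n (Hm e) i j k l", OF finDS inj_m2 _ hs_half _ e x])
        show "hp n (e' - 2) (Z_tensor n (Hm e') i j k l)" if "e' \<in> DS" for e' by (rule hp_Z) (rule hpHm)
        show "(\<Sum>e\<in>DS. Z_tensor n (Hm e) i j k l x) = 0" if "x \<in> half_space n" for x
        proof -
          have "Z_tensor n H i j k l x = Z_tensor n Hs i j k l x"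
            by (rule Z_cong[OF _ ijkl]) (rule HHs)
          also have "\<dots> = (\<Sum>e\<in>DS. Z_tensor n (Hm e) i j k l x)"
            unfolding Hs_def[abs_def] by (rule Z_lin[OF finDS pHm])
          finally show ?thesis using Z0 that ijkl by simp
        qed
      qed
    qed
    then show ?thesis using ext_half[OF hp_Z[where F="Hm e", OF hpHm]] by blast
  qed
  have HS_e: "HS n e (Hm e)" if e: "e \<in> DS" for e
  proof
    show "6 \<le> n" by (rule n6)
    show "2 \<le> e" using DS2[OF e] .
    show "hp n e (Hm e i k)" for i k by (rule hpHm)
    show "Hm e i k = Hm e k i" if "i < n" "k < n" for i k using T_sym[OF e that] by auto
    show "(\<Sum>i<n. Hm e i i x) = 0" for x by (rule T_tr[OF e])
    show "Hm e i (n - 1) x = 0" if "i < n" for i x by (rule T_Hn[OF e that])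
    show "(\<Sum>k<n. Hm e i k x * x k) = 0" if "x \<in> boundary n" "i < n" for x i by (rule T_b1[OF e that(2,1)])
    show "pd (n - 1) (Hm e i k) x = 0" if "x \<in> boundary n" "i < n" "k < n" for x i k by (rule T_b2[OF e that(2,3,1)])
    show "Z_tensor n (Hm e) i j k l x = 0" if "i < n" "j < n" "k < n" "l < n" for x i j k l by (rule T_Z[OF e that])
  qed
  show ?thesis
  proof (intro ballI allI impI)
    fix x i k assume i: "i < n - 1" and k: "k < n - 1"
    have "Hm e i k x = 0" if "e \<in> DS" for e using HS.H_zero[OF HS_e[OF that] i k] .
    then show "H i k x = 0" using HHs_x[of i k x] i k by simp
  qed
qed

end
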